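(* For every $T>0$ and $\lambda>0$, $$\lim_{\delta\to0}\limsup_{m\to\infty}\mathbb{P}^{(m)}_\sigma\big(w'_T(x,\delta)\ge\lambda\big)=0.$$
   Context: Fix a real exponent $b>0$ and a sequence $\sigma=(\sigma_p)_{p\in\mathcal P}$ of nonnegative reals indexed by the set $\mathcal P$ of primes with $\sum_p\sigma_p<\infty$. For a prime $p$, $\mathbb{Q}_p$ denotes the $p$-adic numbers with absolute value $|\cdot|_p$ and $\mathbb{Z}_p$ its closed unit ball. Let $G_p\subset\mathbb{Q}_p$ be the set of $p$-adic numbers of the form $\sum_{k<0}a_kp^k$ with $a_k\in\{0,\dots,p-1\}$, only finitely many nonzero; $G_p$ is a set of representatives of $\mathbb{Q}_p/\mathbb{Z}_p$ and is given the group structure of $\mathbb{Q}_p/\mathbb{Z}_p$. Let $X^{(p)}$ be a $G_p$-valued random variable with $\Pr(|X^{(p)}|_p=p^k)=(p^b-1)p^{-kb}$ for every integer $k\ge1$, and, conditionally on $|X^{(p)}|_p=p^k$, uniformly distributed on the finite set $\{x\in G_p:|x|_p=p^k\}$. Let $X^{(p)}_1,X^{(p)}_2,\dots$ be i.i.d. copies of $X^{(p)}$ and $S^{(p)}_n=X^{(p)}_1+\dots+X^{(p)}_n$ (sum in the group $G_p$), $S^{(p)}_0=0$. Put $D_p=\frac{p^b(p-1)}{p^{b+1}-1}\sigma_p$. For an integer $m\ge0$, let $\mathbb{P}^{(m)}_p$ be the law on $D(\mathbb{Q}_p)$ (càdlàg paths $[0,\infty)\to\mathbb{Q}_p$) of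 $t\mapsto p^mS^{(p)}_{\lfloor D_pp^{mb}t\rfloor}$, and $\mathbb{P}^{(m)}_\sigma=\prod_{p}\mathbb{P}^{(m)}_p$ the product measure on $\prod_pD(\mathbb{Q}_p)$ (independent components). For $x$ with values in $\prod_p\mathbb{Q}_p$ and an interval $I$, set $w(x,I)=\sup_{s,t\in I}\max_p|x_p(s)-x_p(t)|_p/p$ (this is $\sup_{s,t\in I}|x(s)-x(t)|_{\mathbb{A}_{\mathbb{Q}}}$ where $|y|_{\mathbb{A}_{\mathbb{Q}}}=\max_p|y_p|_p/p$ is the adelic absolute value). A partition $0=t_0<t_1<\dots<t_v=T$ is essentially $\delta$-sparse if $t_i-t_{i-1}>\delta$ for $1\le i<v$; the modified modulus of continuity is $w'_T(x,\delta)=\inf\max_{1\le i\le v}w(x,[t_{i-1},t_i))$, the infimum over all essentially $\delta$-sparse partitions of $[0,T)$. *)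

theory Defs
  imports "HOL-Probability.Probability" "HOL-Computational_Algebra.Primes"
begin

definition pval :: "nat \<Rightarrow> rat \<Rightarrow> int" where
  "pval p x = (case quotient_of x of (a, d) \<Rightarrow>
      int (multiplicity (int p) a) - int (multiplicity (int p) d))"

definition padic_abs :: "nat \<Rightarrow> rat \<Rightarrow> real" where
  "padic_abs p x = (if x = 0 then 0 else real p powr (- real_of_int (pval p x)))"

text \<open>G_p = numbers sum_{k<0} a_k p^k with finitely many digits, i.e. rationals in [0,1)
 whose reduced denominator is a power of p. The group law is addition modulo 1 (frac).\<close>

definition Gp :: "nat \<Rightarrow> rat set" where
  "Gp p = {x. 0 \<le> x \<and> x < 1 \<and> (\<exists>k::nat. snd (quotient_of x) = int p ^ k)}"

text \<open>Law of X^(p): P(|X|_p = p^k) = (p^b-1) p^(-kb), uniform on {x in G_p. |x|_p = p^k},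
 a set of cardinality p^k - p^(k-1).\<close>

definition Xfun :: "real \<Rightarrow> nat \<Rightarrow> rat \<Rightarrow> real" where
  "Xfun b p x = (if x \<in> Gp p \<and> x \<noteq> 0 then
      (real p powr b - 1) * (padic_abs p x) powr (- b)
        / (padic_abs p x - padic_abs p x / real p)
    else 0)"

definition Xdist :: "real \<Rightarrow> nat \<Rightarrow> rat pmf" where
  "Xdist b p = embed_pmf (Xfun b p)"

text \<open>Probability space carrying all X^(p)_i, i.i.d. in i and independent in p:
 coordinate (p,i) of the outcome is X^(p)_(i+1).\<close>

definition Pspace :: "real \<Rightarrow> (nat \<times> nat \<Rightarrow> rat) measure" where
  "Pspace b = PiM UNIV (\<lambda>(p, i). measure_pmf (Xdist b p))"

definition Ssum :: "(nat \<times> nat \<Rightarrow> rat) \<Rightarrow> nat \<Rightarrow> nat \<Rightarrow> rat" where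
  "Ssum \<omega> p n = frac (\<Sum>i<n. \<omega> (p, i))"

definition Dconst :: "real \<Rightarrow> (nat \<Rightarrow> real) \<Rightarrow> nat \<Rightarrow> real" where
  "Dconst b \<sigma> p = real p powr b * (real p - 1) / (real p powr (b + 1) - 1) * \<sigma> p"

definition adelic_path :: "real \<Rightarrow> (nat \<Rightarrow> real) \<Rightarrow> nat \<Rightarrow> (nat \<times> nat \<Rightarrow> rat)
    \<Rightarrow> nat \<Rightarrow> real \<Rightarrow> rat" where
  "adelic_path b \<sigma> m \<omega> p t =
     of_nat p ^ m * Ssum \<omega> p (nat \<lfloor>Dconst b \<sigma> p * real p powr (real m * b) * t\<rfloor>)"

definition osc :: "(nat \<Rightarrow> real \<Rightarrow> rat) \<Rightarrow> real set \<Rightarrow> ereal" where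
  "osc x I = (SUP st \<in> I \<times> I. SUP p \<in> {p. prime p}.
       ereal (padic_abs p (x p (fst st) - x p (snd st)) / real p))"

definition ess_sparse_partition :: "real \<Rightarrow> real \<Rightarrow> nat \<Rightarrow> (nat \<Rightarrow> real) \<Rightarrow> bool" where
  "ess_sparse_partition T \<delta> v t \<longleftrightarrow> v \<ge> 1 \<and> t 0 = 0 \<and> t v = T \<and>
     (\<forall>i\<in>{1..v}. t (i - 1) < t i) \<and> (\<forall>i. 1 \<le> i \<and> i < v \<longrightarrow> t i - t (i - 1) > \<delta>)"

definition mod_cont' :: "real \<Rightarrow> (nat \<Rightarrow> real \<Rightarrow> rat) \<Rightarrow> real \<Rightarrow> ereal" where
  "mod_cont' T x \<delta> = (INF vt \<in> {(v, t). ess_sparse_partition T \<delta> v t}.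
       Max ((\<lambda>i. osc x {snd vt (i - 1)..<snd vt i}) ` {1..fst vt}))"

definition outer_prob :: "'a measure \<Rightarrow> 'a set \<Rightarrow> real" where
  "outer_prob M A = Inf (measure M ` {B \<in> sets M. A \<subseteq> B})"

end

theory Submission
  imports Defs "HOL-Number_Theory.Totient"
begin

lemma pval_frac:
  assumes p: "prime p" and a: "a \<noteq> 0" and d: "d \<noteq> 0"
  shows "pval p (of_int a / of_int d) = int (multiplicity (int p) a) - int (multiplicity (int p) d)"
proof -
  obtain a' d' where q: "quotient_of (of_int a / of_int d) = (a', d')" by (cases "quotient_of (of_int a / of_int d)")
  have d': "d' > 0" using quotient_of_denom_pos[OF q] .
  have eq: "(of_int a / of_int d :: rat) = of_int a' / of_int d'" using quotient_of_div[OF q] .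
  have "of_int (a' * d) = (of_int (a * d') :: rat)"
    using eq d d' by (simp add: field_simps)
  then have ad: "a' * d = a * d'" by (simp only: of_int_eq_iff)
  have a': "a' \<noteq> 0" using ad a d d' by auto
  have pi: "prime (int p)" using p by simp
  have "multiplicity (int p) (a' * d) = multiplicity (int p) (a * d')" using ad by simp
  then have "multiplicity (int p) a' + multiplicity (int p) d = multiplicity (int p) a + multiplicity (int p) d'"
    using pi a a' d d' by (simp add: prime_elem_multiplicity_mult_distrib)
  then show ?thesis unfolding pval_def q by simp
qed

thm multiplicity_geI multiplicity_dvd
lemma rat_rep: "(x::rat) \<noteq> 0 \<Longrightarrow> \<exists>a d. a \<noteq> 0 \<and> d \<noteq> 0 \<and> x = of_int a / of_int d"
proof -
  assume x: "x \<noteq> 0"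
  obtain a d where q: "quotient_of x = (a, d)" by (cases "quotient_of x")
  have "x = of_int a / of_int d" using quotient_of_div[OF q] .
  moreover have "d > 0" using quotient_of_denom_pos[OF q] .
  ultimately show ?thesis using x by (intro exI[of _ a] exI[of _ d]) auto
qed

lemma pval_mult:
  assumes p: "prime p" and x: "x \<noteq> 0" and y: "y \<noteq> 0"
  shows "pval p (x * y) = pval p x + pval p y"
proof -
  obtain a d where ad: "a \<noteq> 0" "d \<noteq> 0" "x = of_int a / of_int d" using rat_rep[OF x] by blast
  obtain a' d' where ad': "a' \<noteq> 0" "d' \<noteq> 0" "y = of_int a' / of_int d'" using rat_rep[OF y] by blast
  have pi: "prime (int p)" using p by simp
  have e: "x * y = of_int (a * a') / of_int (d * d')" using ad ad' by simp
  have "pval p (x * y) = int (multiplicity (int p) (a * a')) - int (multiplicity (int p) (d * d'))"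
    unfolding e by (rule pval_frac[OF p]) (use ad ad' in auto)
  moreover have "pval p x = int (multiplicity (int p) a) - int (multiplicity (int p) d)"
    unfolding ad(3) by (rule pval_frac[OF p ad(1,2)])
  moreover have "pval p y = int (multiplicity (int p) a') - int (multiplicity (int p) d')"
    unfolding ad'(3) by (rule pval_frac[OF p ad'(1,2)])
  ultimately show ?thesis using ad ad' pi by (simp add: prime_elem_multiplicity_mult_distrib)
qed

lemma mult_add_ge:
  assumes pi: "prime (q::int)" and u: "u \<noteq> 0" and v: "v \<noteq> 0" and uv: "u + v \<noteq> 0"
  shows "multiplicity q (u + v) \<ge> min (multiplicity q u) (multiplicity q v)"
proof -
  let ?k = "min (multiplicity q u) (multiplicity q v)"
  have "q ^ ?k dvd u" by (meson dvd_trans le_imp_power_dvd min.cobounded1 multiplicity_dvd)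
  moreover have "q ^ ?k dvd v" by (meson dvd_trans le_imp_power_dvd min.cobounded2 multiplicity_dvd)
  ultimately have dd: "q ^ ?k dvd u + v" by simp
  have nu: "\<not> is_unit q" using pi not_prime_unit by blast
  show ?thesis by (rule multiplicity_geI[OF uv nu dd])
qed

lemma pval_add:
  assumes p: "prime p" and x: "x \<noteq> 0" and y: "y \<noteq> 0" and xy: "x + y \<noteq> 0"
  shows "pval p (x + y) \<ge> min (pval p x) (pval p y)"
proof -
  obtain a d where ad: "a \<noteq> 0" "d \<noteq> 0" "x = of_int a / of_int d" using rat_rep[OF x] by blast
  obtain a' d' where ad': "a' \<noteq> 0" "d' \<noteq> 0" "y = of_int a' / of_int d'" using rat_rep[OF y] by blast
  have pi: "prime (int p)" using p by simp
  have e: "x + y = of_int (a * d' + a' * d) / of_int (d * d')" using ad ad' by (simp add: field_simps)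
  have n: "a * d' + a' * d \<noteq> 0"
  proof
    assume h: "a * d' + a' * d = 0"
    have "x + y = of_int 0 / of_int (d * d')" using e by (simp only: h)
    with xy show False by simp
  qed
  have "multiplicity (int p) (a * d' + a' * d) \<ge> min (multiplicity (int p) (a * d')) (multiplicity (int p) (a' * d))"
    using mult_add_ge[OF pi _ _ n] ad ad' by simp
  moreover have "pval p (x + y) = int (multiplicity (int p) (a * d' + a' * d)) - int (multiplicity (int p) (d * d'))"
    unfolding e by (rule pval_frac[OF p n]) (use ad ad' in auto)
  moreover have "pval p x = int (multiplicity (int p) a) - int (multiplicity (int p) d)"
    unfolding ad(3) by (rule pval_frac[OF p ad(1,2)])
  moreover have "pval p y = int (multiplicity (int p) a') - int (multiplicity (int p) d')"
    unfolding ad'(3) by (rule pval_frac[OF p ad'(1,2)])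
  ultimately show ?thesis using ad ad' pi by (simp add: prime_elem_multiplicity_mult_distrib)
qed

lemma pval_int: "prime p \<Longrightarrow> z \<noteq> 0 \<Longrightarrow> pval p (of_int z) \<ge> 0"
  using pval_frac[of p z 1] by simp

lemma pval_ppow: "prime p \<Longrightarrow> pval p (of_nat p ^ m) = int m"
  using pval_frac[of p "int p ^ m" 1] by (simp add: prime_gt_0_nat)

lemma padic_abs_nonneg: "padic_abs p x \<ge> 0"
  by (simp add: padic_abs_def)

lemma padic_abs_0[simp]: "padic_abs p 0 = 0"
  by (simp add: padic_abs_def)

lemma padic_abs_add:
  assumes p: "prime p"
  shows "padic_abs p (x + y) \<le> max (padic_abs p x) (padic_abs p y)"
proof (cases "x = 0 \<or> y = 0 \<or> x + y = 0")
  case True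
  then show ?thesis using padic_abs_nonneg[of p x] padic_abs_nonneg[of p y] by (auto simp: max_def)
next
  case False
  then have m: "pval p (x + y) \<ge> min (pval p x) (pval p y)" using pval_add[OF p] by blast
  have p1: "real p > 1" using prime_gt_1_nat[OF p] by simp
  have "real p powr (- real_of_int (pval p (x + y))) \<le> max (real p powr (- real_of_int (pval p x))) (real p powr (- real_of_int (pval p y)))"
  proof (cases "pval p x \<le> pval p y")
    case True
    then have "pval p (x+y) \<ge> pval p x" using m by simp
    then have "real p powr (- real_of_int (pval p (x + y))) \<le> real p powr (- real_of_int (pval p x))"
      using p1 by (intro powr_mono) auto
    then show ?thesis by simp
  next
    case False
    then have "pval p (x+y) \<ge> pval p y" using m by simp
    then have "real p powr (- real_of_int (pval p (x + y))) \<le> real p powr (- real_of_int (pval p y))"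
      using p1 by (intro powr_mono) auto
    then show ?thesis by simp
  qed
  then show ?thesis using False by (simp add: padic_abs_def)
qed

lemma padic_abs_sum:
  assumes p: "prime p" and c: "c \<ge> 0" and h: "\<And>j. j \<in> F \<Longrightarrow> padic_abs p (f j) \<le> c"
  shows "padic_abs p (\<Sum>j\<in>F. f j) \<le> c"
  using h
proof (induction F rule: infinite_finite_induct)
  case (insert x F)
  have "padic_abs p (\<Sum>j\<in>insert x F. f j) = padic_abs p (f x + (\<Sum>j\<in>F. f j))"
    using insert.hyps by simp
  also have "\<dots> \<le> max (padic_abs p (f x)) (padic_abs p (\<Sum>j\<in>F. f j))" by (rule padic_abs_add[OF p])
  also have "\<dots> \<le> c" using insert by auto
  finally show ?case .
qed (use c in auto)

lemma pval_minus: assumes p: "prime p" and x: "x \<noteq> 0" shows "pval p (- x) = pval p x"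
proof -
  have "pval p (of_int (-1) / of_int 1) = 0" using pval_frac[OF p, of "-1" 1] by (simp add: multiplicity_unit_right)
  then have "pval p (-1) = 0" by simp
  then show ?thesis using pval_mult[OF p, of "-1" x] x by simp
qed

lemma padic_abs_minus: "prime p \<Longrightarrow> padic_abs p (- x) = padic_abs p x"
  by (cases "x = 0") (auto simp: padic_abs_def pval_minus)

lemma padic_abs_ppow_mult:
  assumes p: "prime p"
  shows "padic_abs p (of_nat p ^ m * x) = real p powr (- real m) * padic_abs p x"
proof (cases "x = 0")
  case False
  have pn: "(of_nat p ^ m :: rat) \<noteq> 0" using p by (simp add: prime_gt_0_nat)
  have p0: "real p > 0" using p by (simp add: prime_gt_0_nat)
  have "pval p (of_nat p ^ m * x) = int m + pval p x" using pval_mult[OF p pn False] pval_ppow[OF p] by simp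
  then show ?thesis using False pn p0 by (simp add: padic_abs_def powr_add[symmetric] algebra_simps)
qed simp

lemma padic_abs_int: assumes p: "prime p" shows "padic_abs p (of_int z) \<le> 1"
proof (cases "z = 0")
  case False
  have p1: "real p \<ge> 1" using prime_gt_1_nat[OF p] by simp
  have "pval p (of_int z) \<ge> 0" using pval_int[OF p False] .
  then have "real p powr (- real_of_int (pval p (of_int z))) \<le> real p powr 0"
    using p1 by (intro powr_mono) auto
  then show ?thesis using False p1 by (simp add: padic_abs_def)
qed simp

definition Lset :: "nat \<Rightarrow> nat \<Rightarrow> rat set" where
  "Lset p k = {x. 0 \<le> x \<and> x < 1 \<and> snd (quotient_of x) = int p ^ k}"

lemma quotient_of_frac_coprime:
  assumes "d > 0" "coprime a d"
  shows "quotient_of (of_int a / of_int d) = (a, d)"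
  using assms by (simp add: Fract_of_int_quotient[symmetric] quotient_of_Fract)

lemma Lset_image:
  assumes p: "prime p" and k: "k \<ge> 1"
  shows "Lset p k = (\<lambda>a. of_nat a / of_nat (p ^ k)) ` totatives (p ^ k)"
proof
  have p1: "p > 1" using prime_gt_1_nat[OF p] .
  have pk1: "p ^ k > 1" using one_less_power[OF p1, of k] k by simp
  show "(\<lambda>a. of_nat a / of_nat (p ^ k)) ` totatives (p ^ k) \<subseteq> Lset p k"
  proof
    fix x :: rat assume "x \<in> (\<lambda>a. of_nat a / of_nat (p ^ k)) ` totatives (p ^ k)"
    then obtain a where a: "a \<in> totatives (p ^ k)" and x: "x = of_nat a / of_nat (p ^ k)" by blast
    have a0: "a > 0" "a \<le> p ^ k" "coprime a (p ^ k)" using a by (auto simp: in_totatives_iff)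
    have "a \<noteq> p ^ k" using a0(3) pk1 by auto
    then have alt: "a < p ^ k" using a0 by simp
    have xe: "x = of_int (int a) / of_int (int p ^ k)" by (simp add: x)
    have cp: "coprime (int a) (int p ^ k)" using a0(3) by (metis coprime_int_iff of_nat_power)
    have q: "quotient_of x = (int a, int p ^ k)"
      unfolding xe by (rule quotient_of_frac_coprime) (use p1 cp in auto)
    have "x \<ge> 0" unfolding x by simp
    moreover have "x < 1" unfolding x using alt by (simp add: divide_less_eq)
    ultimately show "x \<in> Lset p k" unfolding Lset_def using q by simp
  qed
  show "Lset p k \<subseteq> (\<lambda>a. of_nat a / of_nat (p ^ k)) ` totatives (p ^ k)"
  proof
    fix x :: rat assume "x \<in> Lset p k"
    then have x: "0 \<le> x" "x < 1" "snd (quotient_of x) = int p ^ k" by (auto simp: Lset_def)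
    obtain a d where q: "quotient_of x = (a, d)" by (cases "quotient_of x")
    have d: "d = int p ^ k" using x(3) q by simp
    have xe: "x = of_int a / of_int d" using quotient_of_div[OF q] .
    have cop: "coprime a d" using quotient_of_coprime[OF q] .
    have dpos: "d > 0" using d p1 by simp
    have "a \<ge> 0"
    proof (rule ccontr)
      assume "\<not> a \<ge> 0"
      then have "(of_int a :: rat) / of_int d < 0" using dpos by (simp add: divide_neg_pos)
      then show False using x(1) xe by simp
    qed
    moreover have "a < d" using x(2) xe dpos by (simp add: divide_less_eq)
    moreover have "a \<noteq> 0"
    proof
      assume "a = 0"
      then have "is_unit d" using cop by simp
      then have "d = 1" using dpos by simp
      then show False using d pk1 by (metis of_nat_1 of_nat_eq_iff of_nat_power less_irrefl)
    qed
    moreover have "coprime (nat a) (p ^ k)"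
    proof -
      have "coprime (int (nat a)) (int (p ^ k))" using cop d \<open>a \<ge> 0\<close> by simp
      then show ?thesis by (simp only: coprime_int_iff)
    qed
    moreover have "nat a \<le> p ^ k" using \<open>a < d\<close> d by (metis less_imp_le nat_le_iff of_nat_power)
    ultimately have "nat a \<in> totatives (p ^ k)" by (auto simp: in_totatives_iff)
    moreover have "x = of_nat (nat a) / of_nat (p ^ k)" using xe d \<open>a \<ge> 0\<close> by simp
    ultimately show "x \<in> (\<lambda>a. of_nat a / of_nat (p ^ k)) ` totatives (p ^ k)" by blast
  qed
qed

lemma Lset_card:
  assumes p: "prime p" and k: "k \<ge> 1"
  shows "finite (Lset p k)" "card (Lset p k) = p ^ (k - 1) * (p - 1)"
proof -
  have p0: "p > 0" using p by (simp add: prime_gt_0_nat)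
  have inj: "inj_on (\<lambda>a. of_nat a / of_nat (p ^ k) :: rat) (totatives (p ^ k))"
    using p0 by (auto simp: inj_on_def)
  show "finite (Lset p k)" unfolding Lset_image[OF p k] by simp
  show "card (Lset p k) = p ^ (k - 1) * (p - 1)" unfolding Lset_image[OF p k]
    using card_image[OF inj] totient_prime_power[OF p, of k] k by (simp add: totient_def)
qed

lemma Lset_props:
  assumes p: "prime p" and k: "k \<ge> 1" and x: "x \<in> Lset p k"
  shows "x \<in> Gp p" "x \<noteq> 0" "pval p x = - int k" "padic_abs p x = real p ^ k"
proof -
  have p1: "p > 1" using prime_gt_1_nat[OF p] .
  have pk1: "p ^ k > 1" using one_less_power[OF p1, of k] k by simp
  have xs: "0 \<le> x" "x < 1" "snd (quotient_of x) = int p ^ k" using x by (auto simp: Lset_def)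
  show "x \<in> Gp p" using xs unfolding Gp_def by blast
  obtain a d where q: "quotient_of x = (a, d)" by (cases "quotient_of x")
  have d: "d = int p ^ k" using xs(3) q by simp
  have cop: "coprime a d" using quotient_of_coprime[OF q] .
  show x0: "x \<noteq> 0"
  proof
    assume "x = 0"
    then have "d = 1" using q by simp
    then show False using d pk1 by (metis of_nat_1 of_nat_eq_iff of_nat_power less_irrefl)
  qed
  have pi: "prime (int p)" using p by simp
  have "\<not> int p dvd a"
  proof
    assume "int p dvd a"
    moreover have "int p dvd d" using d k by (simp add: dvd_power)
    ultimately have "is_unit (int p)" using cop by (meson coprime_common_divisor)
    then show False using pi by (simp add: not_prime_unit)
  qed
  then have ma: "multiplicity (int p) a = 0" by (simp add: not_dvd_imp_multiplicity_0)
  have md: "multiplicity (int p) d = k" using d pi by simp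
  show pv: "pval p x = - int k" unfolding pval_def q using ma md by simp
  show "padic_abs p x = real p ^ k" unfolding padic_abs_def using x0 pv p1 by (simp add: powr_realpow)
qed

lemma Gp_cases:
  assumes p: "prime p" and x: "x \<in> Gp p" "x \<noteq> 0"
  shows "\<exists>k\<ge>1. x \<in> Lset p k"
proof -
  obtain k where xs: "0 \<le> x" "x < 1" "snd (quotient_of x) = int p ^ k" using x(1) by (auto simp: Gp_def)
  have "k \<noteq> 0"
  proof
    assume "k = 0"
    obtain a d where q: "quotient_of x = (a, d)" by (cases "quotient_of x")
    have "d = 1" using xs(3) q \<open>k = 0\<close> by simp
    then have "x = of_int a" using quotient_of_div[OF q] by simp
    then show False using xs(1,2) x(2) by (metis of_int_0_le_iff of_int_less_1_iff order.not_eq_order_implies_strict zero_less_one_class.zero_le_one of_int_eq_0_iff linorder_not_less int_one_le_iff_zero_less)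
  qed
  then show ?thesis using xs by (intro exI[of _ k]) (auto simp: Lset_def)
qed

lemma Lset_disj:
  assumes p: "prime p" and "x \<in> Lset p k" "x \<in> Lset p j"
  shows "k = j"
proof -
  have "int p ^ k = int p ^ j" using assms by (auto simp: Lset_def)
  moreover have "int p > 1" using prime_gt_1_nat[OF p] by simp
  ultimately show ?thesis by (simp add: power_inject_exp)
qed

definition wk :: "real \<Rightarrow> nat \<Rightarrow> nat \<Rightarrow> real" where
  "wk b p k = (real p powr b - 1) * (real p ^ k) powr (- b)"

definition lev :: "nat \<Rightarrow> rat \<Rightarrow> nat" where
  "lev p x = nat (- pval p x)"

definition Wc :: "real \<Rightarrow> nat \<Rightarrow> nat \<Rightarrow> real" where
  "Wc b p k = (real p powr b - 1) * (real p ^ k) powr (- b) / (real p ^ k - real p ^ k / real p)"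

lemma Xfun_L:
  assumes p: "prime p" and k: "k \<ge> 1" and x: "x \<in> Lset p k"
  shows "Xfun b p x = Wc b p k" "lev p x = k"
  using Lset_props[OF p k x] by (auto simp: Xfun_def Wc_def lev_def)

lemma Wc_card:
  assumes p: "prime p" and k: "k \<ge> 1" and b: "b > 0"
  shows "Wc b p k * real (card (Lset p k)) = wk b p k"
proof -
  have p1: "real p > 1" using prime_gt_1_nat[OF p] by simp
  have c: "real (card (Lset p k)) = real p ^ k - real p ^ k / real p"
  proof -
    have "real (card (Lset p k)) = real p ^ (k - 1) * (real p - 1)"
      using Lset_card(2)[OF p k] p1 by (simp add: of_nat_diff)
    also have "\<dots> = real p ^ k - real p ^ k / real p"
      using k p1 by (cases k) (auto simp: field_simps)
    finally show ?thesis .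
  qed
  have "real p ^ k - real p ^ k / real p > 0"
    using p1 by (simp add: field_simps)
  then show ?thesis unfolding c Wc_def wk_def by simp
qed

lemma Wc_nonneg:
  assumes p: "prime p" and b: "b > 0" and k: "k \<ge> 1"
  shows "Wc b p k \<ge> 0"
proof -
  have p1: "real p > 1" using prime_gt_1_nat[OF p] by simp
  have "real p powr b \<ge> 1" using p1 b by (simp add: ge_one_powr_ge_zero)
  moreover have "real p ^ k - real p ^ k / real p > 0" using p1 by (simp add: field_simps)
  ultimately show ?thesis unfolding Wc_def by (intro divide_nonneg_pos mult_nonneg_nonneg) auto
qed

lemma Xfun_nonneg:
  assumes p: "prime p" and b: "b > 0"
  shows "Xfun b p x \<ge> 0"
proof (cases "x \<in> Gp p \<and> x \<noteq> 0")
  case True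
  then obtain k where "k \<ge> 1" "x \<in> Lset p k" using Gp_cases[OF p] by blast
  then show ?thesis using Xfun_L[OF p] Wc_nonneg[OF p b] by metis
next
  case False
  then show ?thesis by (simp add: Xfun_def if_not_P[OF False])
qed

lemma level_sum:
  assumes p: "prime p" and b: "b > 0"
  shows "(\<integral>\<^sup>+x. ennreal (Xfun b p x) * f (lev p x) \<partial>count_space UNIV)
       = (\<Sum>k. ennreal (wk b p (Suc k)) * f (Suc k))"
proof -
  have pt: "ennreal (Xfun b p x) * f (lev p x)
      = (\<Sum>k. ennreal (Xfun b p x) * f (Suc k) * indicator (Lset p (Suc k)) x)" for x
  proof (cases "x \<in> Gp p \<and> x \<noteq> 0")
    case True
    then obtain j where j: "j \<ge> 1" "x \<in> Lset p j" using Gp_cases[OF p] by blast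
    then obtain j' where j': "j = Suc j'" by (cases j) auto
    have "(\<Sum>k. ennreal (Xfun b p x) * f (Suc k) * indicator (Lset p (Suc k)) x)
        = (\<Sum>k\<in>{j'}. ennreal (Xfun b p x) * f (Suc k) * indicator (Lset p (Suc k)) x)"
    proof (rule suminf_finite)
      fix n assume "n \<notin> {j'}"
      then have "x \<notin> Lset p (Suc n)" using Lset_disj[OF p, of x "Suc n" j] j j' by auto
      then show "ennreal (Xfun b p x) * f (Suc n) * indicator (Lset p (Suc n)) x = 0" by simp
    qed simp
    also have "\<dots> = ennreal (Xfun b p x) * f (lev p x)" using Xfun_L(2)[OF p j] j j' by simp
    finally show ?thesis ..
  next
    case False
    then show ?thesis by (simp add: Xfun_def if_not_P[OF False])
  qed
  have "(\<integral>\<^sup>+x. ennreal (Xfun b p x) * f (lev p x) \<partial>count_space UNIV)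
      = (\<integral>\<^sup>+x. (\<Sum>k. ennreal (Xfun b p x) * f (Suc k) * indicator (Lset p (Suc k)) x) \<partial>count_space UNIV)"
    by (simp only: pt)
  also have "\<dots> = (\<Sum>k. \<integral>\<^sup>+x. ennreal (Xfun b p x) * f (Suc k) * indicator (Lset p (Suc k)) x \<partial>count_space UNIV)"
    by (rule nn_integral_suminf) simp
  also have "\<dots> = (\<Sum>k. ennreal (wk b p (Suc k)) * f (Suc k))"
  proof (rule suminf_cong)
    fix k
    have "(\<integral>\<^sup>+x. ennreal (Xfun b p x) * f (Suc k) * indicator (Lset p (Suc k)) x \<partial>count_space UNIV)
        = (\<integral>\<^sup>+x. (ennreal (Wc b p (Suc k)) * f (Suc k)) * indicator (Lset p (Suc k)) x \<partial>count_space UNIV)"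
    proof (rule nn_integral_cong)
      fix x
      show "ennreal (Xfun b p x) * f (Suc k) * indicator (Lset p (Suc k)) x
          = (ennreal (Wc b p (Suc k)) * f (Suc k)) * indicator (Lset p (Suc k)) x"
      proof (cases "x \<in> Lset p (Suc k)")
        case True
        then show ?thesis using Xfun_L(1)[OF p _ True] by simp
      next
        case False
        then show ?thesis by simp
      qed
    qed
    also have "\<dots> = ennreal (Wc b p (Suc k)) * f (Suc k) * of_nat (card (Lset p (Suc k)))"
      using Lset_card(1)[OF p, of "Suc k"] by (simp add: nn_integral_cmult_indicator)
    also have "\<dots> = ennreal (Wc b p (Suc k) * real (card (Lset p (Suc k)))) * f (Suc k)"
      using Wc_nonneg[OF p b, of "Suc k"]
      by (simp add: ennreal_mult' ennreal_of_nat_eq_real_of_nat mult_ac)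
    also have "\<dots> = ennreal (wk b p (Suc k)) * f (Suc k)" using Wc_card[OF p _ b, of "Suc k"] by simp
    finally show "(\<integral>\<^sup>+x. ennreal (Xfun b p x) * f (Suc k) * indicator (Lset p (Suc k)) x \<partial>count_space UNIV)
        = ennreal (wk b p (Suc k)) * f (Suc k)" .
  qed
  finally show ?thesis .
qed

lemma pow_powr: "(x::real) > 0 \<Longrightarrow> (x ^ n) powr a = (x powr a) ^ n"
  by (simp add: powr_realpow[symmetric] powr_powr powr_power mult.commute)

lemma wk_geom:
  assumes p: "prime p"
  shows "wk b p (Suc k) = (real p powr b - 1) * (real p powr (- b)) ^ Suc k"
  using p unfolding wk_def by (subst pow_powr) (auto simp: prime_gt_0_nat)
lemma geom_val:
  assumes p: "prime p" and b: "b > 0"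
  shows "(\<lambda>k. (real p powr b - 1) * (real p powr (- b)) ^ Suc (k + k0)) sums (real p powr b * (real p powr (- b)) ^ Suc k0)"
proof -
  have p1: "real p > 1" using prime_gt_1_nat[OF p] by simp
  let ?x = "real p powr (- b)"
  have xpos: "?x > 0" using p1 by simp
  have x1: "?x < 1" using p1 b by (simp add: powr_less_one)
  have pb: "real p powr b * ?x = 1" using p1 by (simp add: powr_minus field_simps)
  have "(\<lambda>k. ?x ^ k) sums (1 / (1 - ?x))" using geometric_sums[of ?x] xpos x1 by simp
  then have "(\<lambda>k. ((real p powr b - 1) * ?x ^ Suc k0) * ?x ^ k) sums (((real p powr b - 1) * ?x ^ Suc k0) * (1 / (1 - ?x)))"
    by (rule sums_mult)
  moreover have "((real p powr b - 1) * ?x ^ Suc k0) * (1 / (1 - ?x)) = real p powr b * ?x ^ Suc k0"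
  proof -
    have "(real p powr b - 1) = real p powr b * (1 - ?x)" using pb by (simp add: algebra_simps)
    then show ?thesis using x1 by (simp add: field_simps)
  qed
  ultimately show ?thesis by (simp add: power_add mult_ac)
qed


lemma wk_sum1:
  assumes p: "prime p" and b: "b > 0"
  shows "(\<lambda>k. wk b p (Suc k)) sums 1"
proof -
  have p1: "real p > 1" using prime_gt_1_nat[OF p] by simp
  have pb: "real p powr b * real p powr (- b) = 1" using p1 by (simp add: powr_minus field_simps)
  have e: "(\<lambda>k. wk b p (Suc k)) = (\<lambda>k. (real p powr b - 1) * (real p powr (- b)) ^ Suc (k + 0))"
    by (simp only: wk_geom[OF p] add_0_right)
  have "real p powr b * (real p powr (- b)) ^ Suc 0 = 1" using pb by (simp only: power_one_right One_nat_def[symmetric])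
  then show ?thesis using geom_val[OF p b, of 0] unfolding e by simp
qed

lemma wk_nonneg:
  assumes p: "prime p" and b: "b > 0"
  shows "wk b p k \<ge> 0"
proof -
  have "real p powr b \<ge> 1" using prime_gt_1_nat[OF p] b by (simp add: ge_one_powr_ge_zero)
  then show ?thesis unfolding wk_def by simp
qed

lemma Xfun_total:
  assumes p: "prime p" and b: "b > 0"
  shows "(\<integral>\<^sup>+x. ennreal (Xfun b p x) \<partial>count_space UNIV) = 1"
proof -
  have "(\<integral>\<^sup>+x. ennreal (Xfun b p x) * (\<lambda>_. 1) (lev p x) \<partial>count_space UNIV) = (\<Sum>k. ennreal (wk b p (Suc k)) * (\<lambda>_. 1) (Suc k))"
    by (rule level_sum[OF p b])
  moreover have "(\<Sum>k. ennreal (wk b p (Suc k))) = ennreal 1"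
    by (rule suminf_ennreal_eq[OF wk_nonneg[OF p b] wk_sum1[OF p b]])
  ultimately show ?thesis by simp
qed

lemma pmf_Xdist:
  assumes p: "prime p" and b: "b > 0"
  shows "pmf (Xdist b p) x = Xfun b p x"
  unfolding Xdist_def by (rule pmf_embed_pmf) (use Xfun_nonneg[OF p b] Xfun_total[OF p b] in auto)

lemma emeasure_Xdist:
  assumes p: "prime p" and b: "b > 0"
  shows "emeasure (measure_pmf (Xdist b p)) A = (\<integral>\<^sup>+x. ennreal (Xfun b p x) * indicator A x \<partial>count_space UNIV)"
proof -
  have "emeasure (measure_pmf (Xdist b p)) A = (\<integral>\<^sup>+x. indicator A x \<partial>measure_pmf (Xdist b p))"
    by (rule nn_integral_indicator[symmetric]) simp
  also have "\<dots> = (\<integral>\<^sup>+x. ennreal (pmf (Xdist b p) x) * indicator A x \<partial>count_space UNIV)"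
    by (rule nn_integral_measure_pmf)
  also have "\<dots> = (\<integral>\<^sup>+x. ennreal (Xfun b p x) * indicator A x \<partial>count_space UNIV)"
    by (simp only: pmf_Xdist[OF p b])
  finally show ?thesis .
qed

lemma tail_bound:
  assumes p: "prime p" and b: "b > 0" and c: "c > 0"
  shows "emeasure (measure_pmf (Xdist b p)) {x. c \<le> padic_abs p x} \<le> ennreal (real p powr b * c powr (- b))"
proof -
  have p1: "real p > 1" using prime_gt_1_nat[OF p] by simp
  define g :: "nat \<Rightarrow> ennreal" where "g k = (if c \<le> real p ^ k then 1 else 0)" for k
  define t where "t k = wk b p (Suc k) * (if c \<le> real p ^ Suc k then 1 else 0)" for k
  have pt: "ennreal (Xfun b p x) * indicator {x. c \<le> padic_abs p x} x = ennreal (Xfun b p x) * g (lev p x)" for x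
  proof (cases "x \<in> Gp p \<and> x \<noteq> 0")
    case True
    then obtain k where k: "k \<ge> 1" "x \<in> Lset p k" using Gp_cases[OF p] by blast
    show ?thesis using Lset_props(4)[OF p k] Xfun_L(2)[OF p k] by (simp add: g_def indicator_def)
  next
    case False
    then show ?thesis by (simp add: Xfun_def if_not_P[OF False])
  qed
  have "emeasure (measure_pmf (Xdist b p)) {x. c \<le> padic_abs p x}
      = (\<integral>\<^sup>+x. ennreal (Xfun b p x) * g (lev p x) \<partial>count_space UNIV)"
    by (simp only: emeasure_Xdist[OF p b] pt)
  also have "\<dots> = (\<Sum>k. ennreal (wk b p (Suc k)) * g (Suc k))" by (rule level_sum[OF p b])
  also have "\<dots> = (\<Sum>k. ennreal (t k))"
    by (rule suminf_cong) (simp add: t_def g_def)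
  finally have eq: "emeasure (measure_pmf (Xdist b p)) {x. c \<le> padic_abs p x} = (\<Sum>k. ennreal (t k))" .
  have ex: "\<exists>k. c \<le> real p ^ Suc k"
  proof -
    obtain n where "c < real p ^ n" using real_arch_pow[OF p1] by blast
    moreover have "real p ^ n \<le> real p ^ Suc n" using p1 by (intro power_increasing) auto
    ultimately show ?thesis by (intro exI[of _ n]) simp
  qed
  define k0 where "k0 = (LEAST k. c \<le> real p ^ Suc k)"
  have k0: "c \<le> real p ^ Suc k0" unfolding k0_def using LeastI_ex[OF ex] .
  have tlow: "t k = 0" if "k < k0" for k
    using not_less_Least[OF that[unfolded k0_def]] by (simp add: t_def k0_def)
  have thigh: "t k = (real p powr b - 1) * (real p powr (- b)) ^ Suc k" if "k \<ge> k0" for k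
  proof -
    have "real p ^ Suc k0 \<le> real p ^ Suc k" using p1 that by (intro power_increasing) auto
    then show ?thesis using k0 by (simp add: t_def wk_geom[OF p])
  qed
  have "(\<lambda>k. t (k + k0)) = (\<lambda>k. (real p powr b - 1) * (real p powr (- b)) ^ Suc (k + k0))"
    using thigh by auto
  then have "(\<lambda>k. t (k + k0)) sums (real p powr b * (real p powr (- b)) ^ Suc k0)"
    using geom_val[OF p b, of k0] by simp
  then have ts: "t sums (real p powr b * (real p powr (- b)) ^ Suc k0)"
    using tlow by (simp add: sums_iff_shift)
  have tnn: "t k \<ge> 0" for k using wk_nonneg[OF p b] by (simp add: t_def)
  have "(\<Sum>k. ennreal (t k)) = ennreal (real p powr b * (real p powr (- b)) ^ Suc k0)"
    by (rule suminf_ennreal_eq[OF tnn ts])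
  also have "\<dots> \<le> ennreal (real p powr b * c powr (- b))"
  proof (rule ennreal_leI, rule mult_left_mono)
    have "(real p powr (- b)) ^ Suc k0 = (real p ^ Suc k0) powr (- b)" using p1 by (simp only: pow_powr)
    also have "\<dots> \<le> c powr (- b)" using c k0 b by (intro powr_mono2') auto
    finally show "(real p powr (- b)) ^ Suc k0 \<le> c powr (- b)" .
  qed simp
  finally show ?thesis using eq by simp
qed

definition Bigset :: "nat \<Rightarrow> nat \<Rightarrow> real \<Rightarrow> rat set" where
  "Bigset p m lam = {x. real p * lam / 2 \<le> padic_abs p (of_nat p ^ m * x)}"

lemma q_bound:
  assumes p: "prime p" and b: "b > 0" and lam: "lam > 0"
  shows "emeasure (measure_pmf (Xdist b p)) (Bigset p m lam) \<le> ennreal ((2 / lam) powr b * real p powr (- (real m * b)))"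
proof -
  have p1: "real p > 1" using prime_gt_1_nat[OF p] by simp
  define c where "c = real p ^ m * real p * lam / 2"
  have c0: "c > 0" using p1 lam by (simp add: c_def)
  have pm: "real p powr (- real m) = 1 / real p ^ m" using p1 by (simp add: powr_minus powr_realpow divide_inverse)
  have "Bigset p m lam = {x. c \<le> padic_abs p x}"
  proof -
    have "real p * lam / 2 \<le> padic_abs p (of_nat p ^ m * x) \<longleftrightarrow> c \<le> padic_abs p x" for x
      using p1 unfolding padic_abs_ppow_mult[OF p] pm c_def by (simp add: field_simps)
    then show ?thesis unfolding Bigset_def by blast
  qed
  then have "emeasure (measure_pmf (Xdist b p)) (Bigset p m lam) \<le> ennreal (real p powr b * c powr (- b))"
    using tail_bound[OF p b c0] by simp
  also have "real p powr b * c powr (- b) = (2 / lam) powr b * real p powr (- (real m * b))"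
  proof -
    have "c = (real p powr (real m + 1)) * (lam / 2)" unfolding c_def using p1
      by (simp add: powr_add powr_realpow)
    then have "c powr (- b) = (real p powr (real m + 1)) powr (- b) * (lam / 2) powr (- b)"
      using p1 lam by (simp only: powr_mult)
    also have "(real p powr (real m + 1)) powr (- b) = real p powr (- (real m + 1) * b)"
      by (simp add: powr_powr algebra_simps)
    finally have "c powr (- b) = real p powr (- (real m + 1) * b) * (lam / 2) powr (- b)" .
    moreover have "(lam / 2) powr (- b) = (2 / lam) powr b" using lam
      by (simp add: powr_minus powr_divide field_simps)
    moreover have "real p powr b * real p powr (- (real m + 1) * b) = real p powr (- (real m * b))"
      by (simp add: powr_add[symmetric] algebra_simps)
    ultimately show ?thesis by (simp add: mult_ac)
  qed
  finally show ?thesis .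
qed

definition rate :: "real \<Rightarrow> (nat \<Rightarrow> real) \<Rightarrow> nat \<Rightarrow> nat \<Rightarrow> real" where
  "rate b \<sigma> m p = Dconst b \<sigma> p * real p powr (real m * b)"

lemma adelic_path_rate: "adelic_path b \<sigma> m \<omega> p t = of_nat p ^ m * Ssum \<omega> p (nat \<lfloor>rate b \<sigma> m p * t\<rfloor>)"
  by (simp add: adelic_path_def rate_def)

lemma frac_sum_diff:
  fixes f :: "nat \<Rightarrow> rat"
  assumes "nu \<le> ns"
  shows "\<exists>z::int. frac (\<Sum>i<ns. f i) - frac (\<Sum>i<nu. f i) = (\<Sum>i\<in>{nu..<ns}. f i) + of_int z"
proof -
  have "(\<Sum>i<ns. f i) = (\<Sum>i<nu. f i) + (\<Sum>i\<in>{nu..<ns}. f i)"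
    using sum.atLeastLessThan_concat[of 0 nu ns f] assms by (simp add: atLeast0LessThan)
  then show ?thesis unfolding frac_def
    by (intro exI[of _ "\<lfloor>\<Sum>i<nu. f i\<rfloor> - \<lfloor>\<Sum>i<ns. f i\<rfloor>"]) simp
qed

lemma path_bound:
  assumes p: "prime p" and r: "r \<ge> 0" and u: "0 \<le> u" "u \<le> s"
    and m: "(1/2) ^ m \<le> lam" and lam: "lam > 0"
    and nb: "\<And>j. r > 0 \<Longrightarrow> u < real (Suc j) / r \<Longrightarrow> real (Suc j) / r \<le> s \<Longrightarrow>
               padic_abs p (of_nat p ^ m * \<omega> (p, j)) < real p * lam / 2"
  shows "padic_abs p (of_nat p ^ m * Ssum \<omega> p (nat \<lfloor>r * s\<rfloor>) - of_nat p ^ m * Ssum \<omega> p (nat \<lfloor>r * u\<rfloor>))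
           \<le> real p * lam / 2"
proof -
  have p1: "real p > 1" using prime_gt_1_nat[OF p] by simp
  define nu where "nu = nat \<lfloor>r * u\<rfloor>"
  define ns where "ns = nat \<lfloor>r * s\<rfloor>"
  have "r * u \<le> r * s" using r u by (simp add: mult_left_mono)
  then have nuns: "nu \<le> ns" unfolding nu_def ns_def by (simp add: floor_mono nat_mono)
  obtain z where z: "Ssum \<omega> p ns - Ssum \<omega> p nu = (\<Sum>i\<in>{nu..<ns}. \<omega> (p, i)) + of_int z"
    using frac_sum_diff[OF nuns, of "\<lambda>i. \<omega> (p, i)"] unfolding Ssum_def by blast
  have "of_nat p ^ m * Ssum \<omega> p ns - of_nat p ^ m * Ssum \<omega> p nu
      = (\<Sum>i\<in>{nu..<ns}. of_nat p ^ m * \<omega> (p, i)) + of_nat p ^ m * of_int z"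
    by (simp add: right_diff_distrib[symmetric] z sum_distrib_left distrib_left)
  also have "padic_abs p \<dots> \<le> real p * lam / 2"
  proof -
    have c0: "real p * lam / 2 \<ge> 0" using lam by simp
    have s1: "padic_abs p (\<Sum>i\<in>{nu..<ns}. of_nat p ^ m * \<omega> (p, i)) \<le> real p * lam / 2"
    proof (rule padic_abs_sum[OF p c0])
      fix j assume j: "j \<in> {nu..<ns}"
      then have "ns > 0" by simp
      then have rpos: "r > 0" using r unfolding ns_def
        by (metis less_eq_real_def mult_zero_left nat_zero_as_int neq0_conv floor_zero)
      have ru: "r * u \<ge> 0" using r u by simp
      have "\<lfloor>r * u\<rfloor> \<le> int j" using j unfolding nu_def by (simp add: nat_le_iff)
      then have "real j \<ge> real_of_int \<lfloor>r * u\<rfloor>" by linarith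
      then have "real (Suc j) > r * u" by linarith
      then have a: "u < real (Suc j) / r" using rpos by (simp add: field_simps)
      have "int j < \<lfloor>r * s\<rfloor>" using j unfolding ns_def by (simp add: zless_nat_eq_int_zless)
      then have "int j + 1 \<le> \<lfloor>r * s\<rfloor>" by simp
      then have "real (Suc j) \<le> real_of_int \<lfloor>r * s\<rfloor>" by linarith
      then have "real (Suc j) \<le> r * s" by linarith
      then have bb: "real (Suc j) / r \<le> s" using rpos by (simp add: field_simps)
      show "padic_abs p (of_nat p ^ m * \<omega> (p, j)) \<le> real p * lam / 2"
        using nb[OF rpos a bb] by simp
    qed
    have "padic_abs p (of_nat p ^ m * of_int z) = real p powr (- real m) * padic_abs p (of_int z)"
      by (rule padic_abs_ppow_mult[OF p])
    also have "\<dots> \<le> real p powr (- real m)"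
      using padic_abs_int[OF p, of z] by (simp add: mult_left_le)
    also have "real p powr (- real m) = (1 / real p) ^ m"
      using p1 by (simp add: powr_minus powr_realpow power_divide divide_inverse power_inverse)
    also have "\<dots> \<le> (1/2) ^ m" using p1 by (intro power_mono) (auto simp: field_simps)
    also have "\<dots> \<le> real p * lam / 2"
    proof -
      have "real p \<ge> 2" using prime_ge_2_nat[OF p] by simp
      then have "lam \<le> real p * lam / 2" using lam by (simp add: field_simps)
      then show ?thesis using m by linarith
    qed
    finally have s2: "padic_abs p (of_nat p ^ m * of_int z) \<le> real p * lam / 2" .
    show ?thesis using padic_abs_add[OF p] s1 s2 by (meson max.boundedI order_trans)
  qed
  finally show ?thesis unfolding nu_def ns_def .
qed

lemma sep_finite:
  fixes \<Theta> :: "real set"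
  assumes d: "\<delta> > 0" and sub: "\<Theta> \<subseteq> {0..T}"
    and sep: "\<And>x y. x \<in> \<Theta> \<Longrightarrow> y \<in> \<Theta> \<Longrightarrow> x \<noteq> y \<Longrightarrow> \<delta> < \<bar>x - y\<bar>"
  shows "finite \<Theta>"
proof -
  have inj: "inj_on (\<lambda>x. \<lfloor>x / \<delta>\<rfloor>) \<Theta>"
  proof (rule inj_onI, rule ccontr)
    fix x y assume x: "x \<in> \<Theta>" and y: "y \<in> \<Theta>" and e: "\<lfloor>x / \<delta>\<rfloor> = \<lfloor>y / \<delta>\<rfloor>" and ne: "x \<noteq> y"
    have f1: "real_of_int \<lfloor>x / \<delta>\<rfloor> \<le> x / \<delta>" "x / \<delta> < real_of_int \<lfloor>x / \<delta>\<rfloor> + 1"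
      by (rule of_int_floor_le, rule real_of_int_floor_add_one_gt)
    have f2: "real_of_int \<lfloor>y / \<delta>\<rfloor> \<le> y / \<delta>" "y / \<delta> < real_of_int \<lfloor>y / \<delta>\<rfloor> + 1"
      by (rule of_int_floor_le, rule real_of_int_floor_add_one_gt)
    have e': "real_of_int \<lfloor>x / \<delta>\<rfloor> = real_of_int \<lfloor>y / \<delta>\<rfloor>" using e by simp
    have "\<bar>x / \<delta> - y / \<delta>\<bar> < 1" using f1 f2 e' by linarith
    moreover have "x / \<delta> - y / \<delta> = (x - y) / \<delta>" by (simp add: diff_divide_distrib)
    ultimately have "\<bar>(x - y) / \<delta>\<bar> < 1" by (simp only:)
    then have "\<bar>x - y\<bar> / \<delta> < 1" using d by (simp only: abs_divide)
    then have "\<bar>x - y\<bar> < \<delta>" using d by (metis divide_less_eq_1_pos)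
    then show False using sep[OF x y ne] by simp
  qed
  have "(\<lambda>x. \<lfloor>x / \<delta>\<rfloor>) ` \<Theta> \<subseteq> {0..\<lfloor>T / \<delta>\<rfloor>}"
  proof
    fix z assume "z \<in> (\<lambda>x. \<lfloor>x / \<delta>\<rfloor>) ` \<Theta>"
    then obtain x where x: "x \<in> \<Theta>" "z = \<lfloor>x / \<delta>\<rfloor>" by blast
    have "0 \<le> x" "x \<le> T" using sub x by auto
    then have a: "0 \<le> x / \<delta>" "x / \<delta> \<le> T / \<delta>" using d
      by (simp_all add: divide_right_mono)
    have "0 \<le> z" using a(1) x(2) by simp
    moreover have "z \<le> \<lfloor>T / \<delta>\<rfloor>" using a(2) x(2) by (simp add: floor_mono)
    ultimately show "z \<in> {0..\<lfloor>T / \<delta>\<rfloor>}" by simp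
  qed
  then have "finite ((\<lambda>x. \<lfloor>x / \<delta>\<rfloor>) ` \<Theta>)" by (rule finite_subset) simp
  then show ?thesis using inj by (rule finite_imageD)
qed


lemma chain_mono:
  fixes t :: "nat \<Rightarrow> real"
  assumes ch: "\<And>i. 1 \<le> i \<Longrightarrow> i \<le> v \<Longrightarrow> t (i - 1) < t i"
  shows "a \<le> b \<Longrightarrow> b \<le> v \<Longrightarrow> t a \<le> t b"
proof (induction b)
  case 0
  then show ?case by simp
next
  case (Suc b)
  show ?case
  proof (cases "a = Suc b")
    case False
    then have "t a \<le> t b" using Suc by simp
    also have "t b < t (Suc b)" using ch[of "Suc b"] Suc.prems by simp
    finally show ?thesis by simp
  qed simp
qed


lemma partition_exists:
  fixes \<Theta> :: "real set"
  assumes d: "\<delta> > 0" and T: "T > 0" and sub: "\<Theta> \<subseteq> {\<delta><..<T}"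
    and sep: "\<And>x y. x \<in> \<Theta> \<Longrightarrow> y \<in> \<Theta> \<Longrightarrow> x \<noteq> y \<Longrightarrow> \<delta> < \<bar>x - y\<bar>"
  shows "\<exists>v t. ess_sparse_partition T \<delta> v t \<and>
     (\<forall>i\<in>{1..v}. \<forall>\<theta>\<in>\<Theta>. \<not> (t (i - 1) < \<theta> \<and> \<theta> < t i)) \<and>
     (\<forall>i\<in>{1..v}. 0 \<le> t (i - 1) \<and> t i \<le> T)"
proof -
  have sub0: "\<Theta> \<subseteq> {0..T}"
  proof
    fix x assume "x \<in> \<Theta>"
    then have "\<delta> < x" "x < T" using sub by auto
    then show "x \<in> {0..T}" using d by simp
  qed
  have fin: "finite \<Theta>" by (rule sep_finite[OF d sub0 sep])
  obtain xs where xs: "sorted_wrt (<) xs" "set xs = \<Theta>"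
    using finite_set_strict_sorted[OF fin] by blast
  define k where "k = length xs"
  define v where "v = Suc k"
  define t where "t i = (if i = 0 then 0 else if i \<le> k then xs ! (i - 1) else T)" for i
  have inT: "j < k \<Longrightarrow> xs ! j \<in> \<Theta>" for j using xs(2) unfolding k_def by auto
  have lt: "i < j \<Longrightarrow> j < k \<Longrightarrow> xs ! i < xs ! j" for i j
    using sorted_wrt_nth_less[OF xs(1)] unfolding k_def by blast
  have ch: "t (i - 1) < t i" if i1: "1 \<le> i" and i2: "i \<le> v" for i
  proof -
    consider "i = 1" | "2 \<le> i" "i \<le> k" | "2 \<le> i" "i = Suc k" using i1 i2 v_def by linarith
    then show ?thesis
    proof cases
      case 1
      show ?thesis
      proof (cases "k = 0")
        case True then show ?thesis using 1 T by (simp add: t_def)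
      next
        case False
        then have "xs ! 0 \<in> \<Theta>" using inT by simp
        then show ?thesis using 1 False sub d by (auto simp: t_def)
      qed
    next
      case 2
      then obtain i' where ii: "i = Suc (Suc i')" by (metis Suc_pred' add_2_eq_Suc' le_add_diff_inverse2 not_numeral_le_zero zero_less_iff_neq_zero)
      have "xs ! i' < xs ! Suc i'" using lt[of i' "Suc i'"] 2 ii by simp
      then show ?thesis using 2 ii by (simp add: t_def)
    next
      case 3
      then have "xs ! (k - 1) \<in> \<Theta>" using inT by simp
      then show ?thesis using 3 sub by (auto simp: t_def)
    qed
  qed
  have sparse: "t i - t (i - 1) > \<delta>" if i1: "1 \<le> i" and i2: "i < v" for i
  proof -
    consider "i = 1" | "2 \<le> i" "i \<le> k" using i1 i2 v_def by linarith
    then show ?thesis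
    proof cases
      case 1
      then have "xs ! 0 \<in> \<Theta>" using inT i1 i2 v_def by simp
      then show ?thesis using 1 sub by (auto simp: t_def)
    next
      case 2
      then obtain i' where ii: "i = Suc (Suc i')" by (metis Suc_pred' add_2_eq_Suc' le_add_diff_inverse2 not_numeral_le_zero zero_less_iff_neq_zero)
      have a: "xs ! i' \<in> \<Theta>" "xs ! Suc i' \<in> \<Theta>" using inT 2 ii by auto
      have b: "xs ! i' < xs ! Suc i'" using lt[of i' "Suc i'"] 2 ii by simp
      have "\<delta> < \<bar>xs ! Suc i' - xs ! i'\<bar>" using sep[OF a(2) a(1)] b by simp
      then show ?thesis using 2 b ii by (simp add: t_def)
    qed
  qed
  have mono: "a \<le> b \<Longrightarrow> b \<le> v \<Longrightarrow> t a \<le> t b" for a b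
    using chain_mono[of v t, OF ch] by blast
  have part: "ess_sparse_partition T \<delta> v t"
    unfolding ess_sparse_partition_def
  proof (intro conjI ballI allI impI)
    show "v \<ge> 1" by (simp add: v_def)
    show "t 0 = 0" by (simp add: t_def)
    show "t v = T" by (simp add: t_def v_def)
  next
    fix i assume "i \<in> {1..v}" then show "t (i - 1) < t i" using ch by auto
  next
    fix i assume "1 \<le> i \<and> i < v" then show "t i - t (i - 1) > \<delta>" using sparse by auto
  qed
  have gap: "\<not> (t (i - 1) < \<theta> \<and> \<theta> < t i)" if i: "i \<in> {1..v}" and th: "\<theta> \<in> \<Theta>" for i \<theta>
  proof -
    obtain j where j: "j < k" "\<theta> = xs ! j" using th xs(2) unfolding k_def by (metis in_set_conv_nth)
    have tj: "t (Suc j) = \<theta>" using j by (simp add: t_def)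
    show ?thesis
    proof (cases "Suc j \<le> i - 1")
      case True
      then have "t (Suc j) \<le> t (i - 1)" using mono i by auto
      then show ?thesis using tj by simp
    next
      case False
      then have "t i \<le> t (Suc j)" using mono i j v_def by auto
      then show ?thesis using tj by simp
    qed
  qed
  have bnd: "0 \<le> t (i - 1) \<and> t i \<le> T" if i: "i \<in> {1..v}" for i
  proof -
    have "t 0 \<le> t (i - 1)" using mono i by auto
    moreover have "t i \<le> t v" using mono i by auto
    ultimately show ?thesis by (simp add: t_def v_def)
  qed
  show ?thesis using part gap bnd by blast
qed


definition tau :: "real \<Rightarrow> (nat \<Rightarrow> real) \<Rightarrow> nat \<Rightarrow> nat \<times> nat \<Rightarrow> real" where
  "tau b \<sigma> m e = real (Suc (snd e)) / rate b \<sigma> m (fst e)"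

definition Ev :: "real \<Rightarrow> (nat \<Rightarrow> real) \<Rightarrow> nat \<Rightarrow> real \<Rightarrow> real \<Rightarrow> (nat \<times> nat \<Rightarrow> rat) \<Rightarrow> (nat \<times> nat) set" where
  "Ev b \<sigma> m lam T \<omega> = {e. prime (fst e) \<and> \<omega> e \<in> Bigset (fst e) m lam \<and> rate b \<sigma> m (fst e) > 0 \<and> tau b \<sigma> m e < T}"

definition good :: "real \<Rightarrow> (nat \<Rightarrow> real) \<Rightarrow> nat \<Rightarrow> real \<Rightarrow> real \<Rightarrow> real \<Rightarrow> (nat \<times> nat \<Rightarrow> rat) \<Rightarrow> bool" where
  "good b \<sigma> m lam T \<delta> \<omega> \<longleftrightarrow> (\<forall>e\<in>Ev b \<sigma> m lam T \<omega>. \<delta> < tau b \<sigma> m e) \<and>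
     (\<forall>e\<in>Ev b \<sigma> m lam T \<omega>. \<forall>e'\<in>Ev b \<sigma> m lam T \<omega>. e \<noteq> e' \<longrightarrow> \<delta> < \<bar>tau b \<sigma> m e - tau b \<sigma> m e'\<bar>)"

lemma det_main:
  assumes rnn: "\<And>p. prime p \<Longrightarrow> rate b \<sigma> m p \<ge> 0" and T: "T > 0" and lam: "lam > 0" and d: "\<delta> > 0"
    and m: "(1/2) ^ m \<le> lam" and g: "good b \<sigma> m lam T \<delta> \<omega>"
  shows "mod_cont' T (adelic_path b \<sigma> m \<omega>) \<delta> < ereal lam"
proof -
  define E where "E = Ev b \<sigma> m lam T \<omega>"
  define \<Theta> where "\<Theta> = tau b \<sigma> m ` E"
  have g1: "\<And>e. e \<in> E \<Longrightarrow> \<delta> < tau b \<sigma> m e" and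
       g2: "\<And>e e'. e \<in> E \<Longrightarrow> e' \<in> E \<Longrightarrow> e \<noteq> e' \<Longrightarrow> \<delta> < \<bar>tau b \<sigma> m e - tau b \<sigma> m e'\<bar>"
    using g unfolding good_def E_def by blast+
  have sub: "\<Theta> \<subseteq> {\<delta><..<T}"
  proof
    fix x assume "x \<in> \<Theta>"
    then obtain e where e: "e \<in> E" "x = tau b \<sigma> m e" unfolding \<Theta>_def by blast
    have "tau b \<sigma> m e < T" using e(1) unfolding E_def Ev_def by blast
    then show "x \<in> {\<delta><..<T}" using g1[OF e(1)] e(2) by simp
  qed
  have sep: "\<delta> < \<bar>x - y\<bar>" if xT: "x \<in> \<Theta>" and yT: "y \<in> \<Theta>" and xy: "x \<noteq> y" for x y
  proof -
    obtain e where e: "e \<in> E" "x = tau b \<sigma> m e" using xT unfolding \<Theta>_def by blast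
    obtain e' where e': "e' \<in> E" "y = tau b \<sigma> m e'" using yT unfolding \<Theta>_def by blast
    have "e \<noteq> e'" using e e' xy by blast
    then show ?thesis using g2[OF e(1) e'(1)] e e' by simp
  qed
  obtain v t where part: "ess_sparse_partition T \<delta> v t"
    and gap: "\<forall>i\<in>{1..v}. \<forall>\<theta>\<in>\<Theta>. \<not> (t (i - 1) < \<theta> \<and> \<theta> < t i)"
    and bnd: "\<forall>i\<in>{1..v}. 0 \<le> t (i - 1) \<and> t i \<le> T"
    using partition_exists[OF d T sub sep] by blast
  let ?x = "adelic_path b \<sigma> m \<omega>"
  have key: "padic_abs p (?x p s - ?x p u) \<le> real p * lam / 2"
    if i: "i \<in> {1..v}" and p: "prime p" and s: "s \<in> {t (i - 1)..<t i}" and u: "u \<in> {t (i - 1)..<t i}"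
      and us: "u \<le> s" for i p s u
  proof -
    have "0 \<le> t (i - 1)" using bnd i by blast
    then have u0: "0 \<le> u" using u by simp
    have nb: "padic_abs p (of_nat p ^ m * \<omega> (p, j)) < real p * lam / 2"
      if r: "rate b \<sigma> m p > 0" and j1: "u < real (Suc j) / rate b \<sigma> m p" and j2: "real (Suc j) / rate b \<sigma> m p \<le> s" for j
    proof (rule ccontr)
      assume "\<not> padic_abs p (of_nat p ^ m * \<omega> (p, j)) < real p * lam / 2"
      then have big: "\<omega> (p, j) \<in> Bigset p m lam" unfolding Bigset_def by simp
      have tj: "tau b \<sigma> m (p, j) = real (Suc j) / rate b \<sigma> m p" by (simp add: tau_def)
      have "s < t i" using s by simp
      also have "t i \<le> T" using bnd i by blast
      finally have "tau b \<sigma> m (p, j) < T" using j2 tj by simp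
      then have "(p, j) \<in> E" unfolding E_def Ev_def using p big r by simp
      then have "tau b \<sigma> m (p, j) \<in> \<Theta>" unfolding \<Theta>_def by blast
      moreover have "t (i - 1) < tau b \<sigma> m (p, j)" using u j1 tj by simp
      moreover have "tau b \<sigma> m (p, j) < t i" using s j2 tj by simp
      ultimately show False using gap i by blast
    qed
    show ?thesis unfolding adelic_path_rate
      by (rule path_bound[where \<omega>=\<omega>, OF p rnn[OF p] u0 us m lam nb])
  qed
  have osc_le: "osc ?x {t (i - 1)..<t i} \<le> ereal (lam / 2)" if i: "i \<in> {1..v}" for i
    unfolding osc_def
  proof (rule SUP_least, rule SUP_least)
    fix st and p :: nat assume st: "st \<in> {t (i - 1)..<t i} \<times> {t (i - 1)..<t i}" and p: "p \<in> {p. prime p}"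
    have pp: "prime p" using p by simp
    have p0: "real p > 0" using pp by (simp add: prime_gt_0_nat)
    have "padic_abs p (?x p (fst st) - ?x p (snd st)) \<le> real p * lam / 2"
    proof (cases "snd st \<le> fst st")
      case True
      then show ?thesis using key[OF i pp, of "fst st" "snd st"] st by auto
    next
      case False
      then have "padic_abs p (?x p (snd st) - ?x p (fst st)) \<le> real p * lam / 2"
        using key[OF i pp, of "snd st" "fst st"] st by auto
      moreover have "?x p (fst st) - ?x p (snd st) = - (?x p (snd st) - ?x p (fst st))" by simp
      ultimately show ?thesis using padic_abs_minus[OF pp] by metis
    qed
    then have "padic_abs p (?x p (fst st) - ?x p (snd st)) / real p \<le> lam / 2"
      using p0 by (simp add: divide_le_eq mult.commute)
    then show "ereal (padic_abs p (?x p (fst st) - ?x p (snd st)) / real p) \<le> ereal (lam / 2)" by simp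
  qed
  have v1: "v \<ge> 1" using part unfolding ess_sparse_partition_def by blast
  have "mod_cont' T ?x \<delta> \<le> Max ((\<lambda>i. osc ?x {snd (v, t) (i - 1)..<snd (v, t) i}) ` {1..fst (v, t)})"
    unfolding mod_cont'_def by (rule INF_lower) (use part in simp)
  also have "\<dots> \<le> ereal (lam / 2)"
    using v1 osc_le by (simp add: Max_le_iff)
  also have "\<dots> < ereal lam" using lam by simp
  finally show ?thesis .
qed

lemma space_Pspace: "space (Pspace b) = UNIV"
  by (auto simp: Pspace_def space_PiM PiE_def Pi_def extensional_def space_measure_pmf split: prod.splits)

lemma Pspace_comp: "(\<lambda>(p, i). measure_pmf (Xdist b p)) e = measure_pmf (Xdist b (fst e))"
  by (cases e) simp

lemma meas_B1: "(\<lambda>\<omega>. indicator A (\<omega> e) :: ennreal) \<in> borel_measurable (Pspace b)"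
proof -
  have "(\<lambda>\<omega>. \<omega> e) \<in> measurable (Pspace b) ((\<lambda>(p, i). measure_pmf (Xdist b p)) e)"
    unfolding Pspace_def by (rule measurable_component_singleton) simp
  moreover have "(indicator A :: _ \<Rightarrow> ennreal) \<in> borel_measurable ((\<lambda>(p, i). measure_pmf (Xdist b p)) e)"
    unfolding Pspace_comp by simp
  ultimately show ?thesis by (rule measurable_compose)
qed

lemma emb_eq:
  assumes "finite J"
  shows "prod_emb UNIV (\<lambda>(p, i). measure_pmf (Xdist b p)) J (Pi\<^sub>E J X) = {\<omega>. \<forall>j\<in>J. \<omega> j \<in> X j}"
  by (auto simp: prod_emb_def PiE_def Pi_def extensional_def space_measure_pmf split: prod.splits)

lemma pair_indep:
  assumes ne: "e \<noteq> e'"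
  shows "(\<integral>\<^sup>+\<omega>. indicator A (\<omega> e) * indicator A' (\<omega> e') \<partial>Pspace b)
       = emeasure (measure_pmf (Xdist b (fst e))) A * emeasure (measure_pmf (Xdist b (fst e'))) A'"
proof -
  define X where "X j = (if j = e then A else A')" for j
  let ?S = "prod_emb UNIV (\<lambda>(p, i). measure_pmf (Xdist b p)) {e, e'} (Pi\<^sub>E {e, e'} X)"
  have S: "?S = {\<omega>. \<omega> e \<in> A \<and> \<omega> e' \<in> A'}"
    using ne by (subst emb_eq) (auto simp: X_def)
  have "(\<integral>\<^sup>+\<omega>. indicator A (\<omega> e) * indicator A' (\<omega> e') \<partial>Pspace b) = (\<integral>\<^sup>+\<omega>. indicator ?S \<omega> \<partial>Pspace b)"
    by (rule nn_integral_cong) (simp add: S indicator_def)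
  also have "\<dots> = emeasure (Pspace b) ?S"
  proof (rule nn_integral_indicator)
    show "?S \<in> sets (Pspace b)" unfolding Pspace_def
      by (rule sets_PiM_I) (auto simp: split_beta)
  qed
  also have "\<dots> = (\<Prod>j\<in>{e, e'}. emeasure ((\<lambda>(p, i). measure_pmf (Xdist b p)) j) (X j))"
    unfolding Pspace_def by (rule emeasure_PiM_emb) (auto intro: prob_space_measure_pmf simp: split_beta)
  also have "\<dots> = emeasure (measure_pmf (Xdist b (fst e))) A * emeasure (measure_pmf (Xdist b (fst e'))) A'"
    using ne by (simp add: X_def Pspace_comp)
  finally show ?thesis .
qed

lemma single_int:
  shows "(\<integral>\<^sup>+\<omega>. indicator A (\<omega> e) \<partial>Pspace b) = emeasure (measure_pmf (Xdist b (fst e))) A"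
proof -
  let ?S = "prod_emb UNIV (\<lambda>(p, i). measure_pmf (Xdist b p)) {e} (Pi\<^sub>E {e} (\<lambda>_. A))"
  have S: "?S = {\<omega>. \<omega> e \<in> A}" by (subst emb_eq) auto
  have "(\<integral>\<^sup>+\<omega>. indicator A (\<omega> e) \<partial>Pspace b) = (\<integral>\<^sup>+\<omega>. indicator ?S \<omega> \<partial>Pspace b)"
    by (rule nn_integral_cong) (simp add: S indicator_def)
  also have "\<dots> = emeasure (Pspace b) ?S"
  proof (rule nn_integral_indicator)
    show "?S \<in> sets (Pspace b)" unfolding Pspace_def
      by (rule sets_PiM_I) (auto simp: split_beta)
  qed
  also have "\<dots> = (\<Prod>j\<in>{e}. emeasure ((\<lambda>(p, i). measure_pmf (Xdist b p)) j) A)"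
    unfolding Pspace_def by (rule emeasure_PiM_emb) (auto intro: prob_space_measure_pmf simp: split_beta)
  also have "\<dots> = emeasure (measure_pmf (Xdist b (fst e))) A"
    by (simp add: Pspace_comp)
  finally show ?thesis .
qed

lemma ennreal_le_suminf: "f i \<le> (\<Sum>i. f i :: ennreal)"
proof (rule ccontr)
  assume "\<not> f i \<le> (\<Sum>i. f i)"
  then have "(\<Sum>i. f i) < f i" by simp
  then have "f i < f i" by (rule ennreal_suminf_lessD)
  then show False by simp
qed

lemma suminf_le_ennreal: "(\<And>n. f n \<le> g n) \<Longrightarrow> (\<Sum>n. f n :: ennreal) \<le> (\<Sum>n. g n)"
  by (rule suminf_le) auto

lemma sum_if_card:
  assumes "finite {i::nat. P i}"
  shows "(\<Sum>i. if P i then c else 0 :: ennreal) = of_nat (card {i. P i}) * c"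
proof -
  have "(\<Sum>i. if P i then c else 0 :: ennreal) = (\<Sum>i\<in>{i. P i}. if P i then c else 0)"
    by (rule suminf_finite[OF assms]) simp
  also have "\<dots> = (\<Sum>i\<in>{i. P i}. c)" by (rule sum.cong) auto
  finally show ?thesis by simp
qed

lemma sum_if_bound:
  assumes "finite {i::nat. P i}" "real (card {i. P i}) \<le> B"
  shows "(\<Sum>i. if P i then c else 0 :: ennreal) \<le> ennreal B * c"
proof -
  have "of_nat (card {i. P i}) \<le> ennreal B"
    using assms(2) by (simp add: ennreal_of_nat_eq_real_of_nat ennreal_leI)
  then show ?thesis unfolding sum_if_card[OF assms(1)] by (rule mult_right_mono) simp
qed

lemma count_le:
  assumes r: "r > 0" and x: "x \<ge> 0"
  shows "finite {i::nat. real (Suc i) / r \<le> x}" "real (card {i::nat. real (Suc i) / r \<le> x}) \<le> r * x"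
proof -
  have e: "{i::nat. real (Suc i) / r \<le> x} = {..<nat \<lfloor>r * x\<rfloor>}"
  proof (rule set_eqI)
    fix i :: nat
    have "real (Suc i) / r \<le> x \<longleftrightarrow> real (Suc i) \<le> r * x" using r by (simp add: divide_le_eq mult.commute)
    also have "\<dots> \<longleftrightarrow> int (Suc i) \<le> \<lfloor>r * x\<rfloor>" by (simp add: le_floor_iff)
    also have "\<dots> \<longleftrightarrow> i < nat \<lfloor>r * x\<rfloor>" by linarith
    finally show "i \<in> {i::nat. real (Suc i) / r \<le> x} \<longleftrightarrow> i \<in> {..<nat \<lfloor>r * x\<rfloor>}" by simp
  qed
  show "finite {i::nat. real (Suc i) / r \<le> x}" unfolding e by simp
  have "real (nat \<lfloor>r * x\<rfloor>) \<le> r * x" using r x by simp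
  then show "real (card {i::nat. real (Suc i) / r \<le> x}) \<le> r * x" unfolding e by simp
qed

lemma card_window:
  fixes S :: "nat set"
  assumes L: "L \<ge> 0" and h: "\<And>i. i \<in> S \<Longrightarrow> a \<le> real i \<and> real i \<le> a + L"
  shows "finite S" "real (card S) \<le> L + 1"
proof -
  have "S \<subseteq> {..nat \<lceil>a + L\<rceil>}"
  proof
    fix i assume "i \<in> S"
    then have "real i \<le> a + L" using h by blast
    then have "int i \<le> \<lceil>a + L\<rceil>" by linarith
    then show "i \<in> {..nat \<lceil>a + L\<rceil>}" by simp
  qed
  then show fin: "finite S" by (rule finite_subset) simp
  show "real (card S) \<le> L + 1"
  proof (cases "S = {}")
    case False
    define lo where "lo = Min S"
    define hi where "hi = Max S"
    have lo: "lo \<in> S" unfolding lo_def using fin False by simp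
    have hi: "hi \<in> S" unfolding hi_def using fin False by simp
    have "S \<subseteq> {lo..hi}" unfolding lo_def hi_def using fin by auto
    then have "card S \<le> card {lo..hi}" by (rule card_mono[rotated]) simp
    also have "card {lo..hi} = Suc hi - lo" by simp
    finally have c: "card S \<le> Suc hi - lo" .
    have "real hi - real lo \<le> L" using h[OF lo] h[OF hi] by linarith
    moreover have "lo \<le> hi" unfolding lo_def hi_def using fin False by simp
    ultimately have "real (Suc hi - lo) \<le> L + 1" by (simp add: of_nat_diff)
    then show ?thesis using c by (meson of_nat_le_iff order_trans)
  qed (use L in simp)
qed

lemma Dconst_bounds:
  assumes p: "prime p" and b: "b > 0" and s: "\<sigma> p \<ge> 0"
  shows "0 \<le> Dconst b \<sigma> p" "Dconst b \<sigma> p \<le> \<sigma> p"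
proof -
  have p1: "real p > 1" using prime_gt_1_nat[OF p] by simp
  have pb: "real p powr b \<ge> 1" using p1 b by (simp add: ge_one_powr_ge_zero)
  have e: "real p powr (b + 1) = real p powr b * real p" using p1 by (simp add: powr_add)
  have "real p powr b * (real p - 1) > 0" using pb p1 by simp
  moreover have "real p powr b * (real p - 1) \<le> real p powr (b + 1) - 1" using e pb by (simp add: algebra_simps)
  ultimately have c0: "0 \<le> real p powr b * (real p - 1) / (real p powr (b + 1) - 1)"
    and c1: "real p powr b * (real p - 1) / (real p powr (b + 1) - 1) \<le> 1"
    by (auto simp: divide_le_eq_1)
  show "0 \<le> Dconst b \<sigma> p" unfolding Dconst_def using c0 s by (rule mult_nonneg_nonneg)
  show "Dconst b \<sigma> p \<le> \<sigma> p" unfolding Dconst_def using mult_right_mono[OF c1 s] by simp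
qed

lemma rate_nonneg:
  assumes p: "prime p" and b: "b > 0" and s: "\<sigma> p \<ge> 0"
  shows "rate b \<sigma> m p \<ge> 0"
  unfolding rate_def using Dconst_bounds(1)[where \<sigma>=\<sigma>, OF p b s] by simp

lemma rate_times:
  assumes p: "prime p"
  shows "rate b \<sigma> m p * real p powr (- (real m * b)) = Dconst b \<sigma> p"
proof -
  have p0: "real p > 0" using p by (simp add: prime_gt_0_nat)
  have "real p powr (real m * b) * real p powr (- (real m * b)) = 1" using p0 by (simp add: powr_add[symmetric])
  then show ?thesis unfolding rate_def by (simp add: mult.assoc)
qed

definition Ssig :: "(nat \<Rightarrow> real) \<Rightarrow> real" where
  "Ssig \<sigma> = (\<Sum>p. if prime p then \<sigma> p else 0)"

definition Z0 :: real where
  "Z0 = (\<Sum>n. real n powr (- 2))"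

lemma Z0_summable: "summable (\<lambda>n. real n powr (- 2))"
  by (simp add: summable_real_powr_iff)

lemma sig_summable:
  assumes "\<sigma> summable_on {p. prime p}"
  shows "summable (\<lambda>p. if prime p then \<sigma> p else 0)"
proof -
  have "(\<lambda>p. if prime p then \<sigma> p else 0) summable_on UNIV"
  proof -
    have "\<sigma> summable_on {p. prime p} \<longleftrightarrow> (\<lambda>p. if prime p then \<sigma> p else 0) summable_on UNIV"
      by (rule summable_on_cong_neutral) auto
    then show ?thesis using assms by simp
  qed
  then show ?thesis by (rule summable_on_imp_summable)
qed

lemma sum_primes_sig:
  assumes s: "\<sigma> summable_on {p. prime p}" and nn: "\<And>p. prime p \<Longrightarrow> \<sigma> p \<ge> 0" and c: "c \<ge> 0"
  shows "(\<Sum>p. if prime p then ennreal (c * \<sigma> p) else 0) = ennreal (c * Ssig \<sigma>)"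
proof -
  have "(\<Sum>p. if prime p then ennreal (c * \<sigma> p) else 0) = (\<Sum>p. ennreal (c * (if prime p then \<sigma> p else 0)))"
    by (rule suminf_cong) simp
  also have "\<dots> = ennreal (c * Ssig \<sigma>)"
  proof (rule suminf_ennreal_eq)
    show "0 \<le> c * (if prime p then \<sigma> p else 0)" for p using c nn by simp
    show "(\<lambda>p. c * (if prime p then \<sigma> p else 0)) sums (c * Ssig \<sigma>)"
      unfolding Ssig_def by (rule sums_mult[OF summable_sums[OF sig_summable[OF s]]])
  qed
  finally show ?thesis .
qed

lemma sum_primes_pow:
  assumes sb: "s \<ge> 2" and c: "c \<ge> 0"
  shows "(\<Sum>p. if prime p then ennreal (c * real p powr (- s)) else 0) \<le> ennreal (c * 4 * 2 powr (- s) * Z0)"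
proof -
  have "(\<Sum>p. if prime p then ennreal (c * real p powr (- s)) else 0) \<le> (\<Sum>n. ennreal ((c * 4 * 2 powr (- s)) * real n powr (- 2)))"
  proof (rule suminf_le_ennreal)
    fix n
    show "(if prime n then ennreal (c * real n powr (- s)) else 0) \<le> ennreal ((c * 4 * 2 powr (- s)) * real n powr (- 2))"
    proof (cases "prime n")
      case True
      have n2: "real n \<ge> 2" using prime_ge_2_nat[OF True] by simp
      have "real n powr (- s) = real n powr (- (s - 2)) * real n powr (- 2)"
        using n2 by (simp add: powr_add[symmetric])
      also have "\<dots> \<le> 2 powr (- (s - 2)) * real n powr (- 2)"
        using n2 sb by (intro mult_right_mono powr_mono2') auto
      also have "2 powr (- (s - 2)) = 4 * 2 powr (- s)"
        by (simp add: powr_add[symmetric] powr_diff powr_minus_divide)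
      finally have "c * real n powr (- s) \<le> c * (4 * 2 powr (- s) * real n powr (- 2))"
        using c by (intro mult_left_mono) auto
      then show ?thesis using True by (simp add: ennreal_leI mult_ac)
    qed simp
  qed
  also have "\<dots> = ennreal ((c * 4 * 2 powr (- s)) * Z0)"
  proof (rule suminf_ennreal_eq)
    show "0 \<le> (c * 4 * 2 powr (- s)) * real n powr (- 2)" for n using c by simp
    show "(\<lambda>n. (c * 4 * 2 powr (- s)) * real n powr (- 2)) sums ((c * 4 * 2 powr (- s)) * Z0)"
      unfolding Z0_def by (rule sums_mult[OF summable_sums[OF Z0_summable]])
  qed
  finally show ?thesis .
qed

context
  fixes b :: real and \<sigma> :: "nat \<Rightarrow> real" and m :: nat and lam T \<delta> :: real
  assumes b: "b > 0" and \<sigma>nn: "\<And>p. prime p \<Longrightarrow> \<sigma> p \<ge> 0" and T: "T > 0" and lam: "lam > 0" and d: "\<delta> > 0"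
    and \<sigma>sum: "\<sigma> summable_on {p. prime p}"
begin

definition early :: "nat \<times> nat \<Rightarrow> bool" where
  "early e \<longleftrightarrow> prime (fst e) \<and> rate b \<sigma> m (fst e) > 0 \<and> tau b \<sigma> m e \<le> \<delta>"

definition close :: "nat \<times> nat \<Rightarrow> nat \<times> nat \<Rightarrow> bool" where
  "close e e' \<longleftrightarrow> prime (fst e) \<and> prime (fst e') \<and> rate b \<sigma> m (fst e) > 0 \<and> rate b \<sigma> m (fst e') > 0
     \<and> tau b \<sigma> m e < T \<and> tau b \<sigma> m e' < T \<and> e \<noteq> e' \<and> \<bar>tau b \<sigma> m e - tau b \<sigma> m e'\<bar> \<le> \<delta>"

definition Bi :: "(nat \<times> nat \<Rightarrow> rat) \<Rightarrow> nat \<times> nat \<Rightarrow> ennreal" where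
  "Bi \<omega> e = indicator (Bigset (fst e) m lam) (\<omega> e)"

definition F1 :: "(nat \<times> nat \<Rightarrow> rat) \<Rightarrow> ennreal" where
  "F1 \<omega> = (\<Sum>p. \<Sum>i. if early (p, i) then Bi \<omega> (p, i) else 0)"

definition F2 :: "(nat \<times> nat \<Rightarrow> rat) \<Rightarrow> ennreal" where
  "F2 \<omega> = (\<Sum>p. \<Sum>i. \<Sum>p'. \<Sum>i'. if close (p, i) (p', i') then Bi \<omega> (p, i) * Bi \<omega> (p', i') else 0)"

definition Q :: "nat \<Rightarrow> ennreal" where
  "Q p = emeasure (measure_pmf (Xdist b p)) (Bigset p m lam)"

lemma Bi_meas[measurable]: "(\<lambda>\<omega>. Bi \<omega> e) \<in> borel_measurable (Pspace b)"
  unfolding Bi_def by (rule meas_B1)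

lemma F1_meas[measurable]: "F1 \<in> borel_measurable (Pspace b)"
  unfolding F1_def by measurable

lemma F2_meas[measurable]: "F2 \<in> borel_measurable (Pspace b)"
  unfolding F2_def by measurable

lemma notgood_F:
  assumes ng: "\<not> good b \<sigma> m lam T \<delta> \<omega>"
  shows "1 \<le> F1 \<omega> + F2 \<omega>"
proof -
  let ?E = "Ev b \<sigma> m lam T \<omega>"
  have inE: "prime (fst e) \<and> \<omega> e \<in> Bigset (fst e) m lam \<and> rate b \<sigma> m (fst e) > 0 \<and> tau b \<sigma> m e < T" if "e \<in> ?E" for e
    using that unfolding Ev_def by blast
  have Bi1: "Bi \<omega> e = 1" if "e \<in> ?E" for e using inE[OF that] by (simp add: Bi_def)
  consider (a) e where "e \<in> ?E" "tau b \<sigma> m e \<le> \<delta>"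
    | (c) e e' where "e \<in> ?E" "e' \<in> ?E" "e \<noteq> e'" "\<bar>tau b \<sigma> m e - tau b \<sigma> m e'\<bar> \<le> \<delta>"
    using ng unfolding good_def by (meson not_less)
  then show ?thesis
  proof cases
    case (a e)
    obtain p i where e: "e = (p, i)" by (cases e)
    have "early (p, i)" using inE[OF a(1)] a(2) e by (simp add: early_def)
    then have "1 = (if early (p, i) then Bi \<omega> (p, i) else 0)" using Bi1[OF a(1)] e by simp
    also have "\<dots> \<le> (\<Sum>i. if early (p, i) then Bi \<omega> (p, i) else 0)" by (rule ennreal_le_suminf)
    also have "\<dots> \<le> F1 \<omega>" unfolding F1_def by (rule ennreal_le_suminf)
    also have "\<dots> \<le> F1 \<omega> + F2 \<omega>" by simp
    finally show ?thesis .
  next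
    case (c e e')
    obtain p i where e: "e = (p, i)" by (cases e)
    obtain p' i' where e': "e' = (p', i')" by (cases e')
    have "close (p, i) (p', i')" using inE[OF c(1)] inE[OF c(2)] c(3,4) e e' by (simp add: close_def)
    then have "1 = (if close (p, i) (p', i') then Bi \<omega> (p, i) * Bi \<omega> (p', i') else 0)"
      using Bi1[OF c(1)] Bi1[OF c(2)] e e' by simp
    also have "\<dots> \<le> (\<Sum>i'. if close (p, i) (p', i') then Bi \<omega> (p, i) * Bi \<omega> (p', i') else 0)" by (rule ennreal_le_suminf)
    also have "\<dots> \<le> (\<Sum>p'. \<Sum>i'. if close (p, i) (p', i') then Bi \<omega> (p, i) * Bi \<omega> (p', i') else 0)" by (rule ennreal_le_suminf)
    also have "\<dots> \<le> (\<Sum>i. \<Sum>p'. \<Sum>i'. if close (p, i) (p', i') then Bi \<omega> (p, i) * Bi \<omega> (p', i') else 0)" by (rule ennreal_le_suminf)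
    also have "\<dots> \<le> F2 \<omega>" unfolding F2_def by (rule ennreal_le_suminf)
    also have "\<dots> \<le> F1 \<omega> + F2 \<omega>" by simp
    finally show ?thesis .
  qed
qed

lemma int_F1: "(\<integral>\<^sup>+\<omega>. F1 \<omega> \<partial>Pspace b) = (\<Sum>p. \<Sum>i. if early (p, i) then Q p else 0)"
proof -
  have "(\<integral>\<^sup>+\<omega>. F1 \<omega> \<partial>Pspace b) = (\<Sum>p. \<integral>\<^sup>+\<omega>. (\<Sum>i. if early (p, i) then Bi \<omega> (p, i) else 0) \<partial>Pspace b)"
    unfolding F1_def by (rule nn_integral_suminf) measurable
  also have "\<dots> = (\<Sum>p. \<Sum>i. \<integral>\<^sup>+\<omega>. (if early (p, i) then Bi \<omega> (p, i) else 0) \<partial>Pspace b)"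
    by (rule suminf_cong, rule nn_integral_suminf) measurable
  also have "\<dots> = (\<Sum>p. \<Sum>i. if early (p, i) then Q p else 0)"
    by (intro suminf_cong) (simp add: Bi_def single_int Q_def)
  finally show ?thesis .
qed

lemma int_F2: "(\<integral>\<^sup>+\<omega>. F2 \<omega> \<partial>Pspace b) = (\<Sum>p. \<Sum>i. \<Sum>p'. \<Sum>i'. if close (p, i) (p', i') then Q p * Q p' else 0)"
proof -
  have "(\<integral>\<^sup>+\<omega>. F2 \<omega> \<partial>Pspace b) = (\<Sum>p. \<integral>\<^sup>+\<omega>. (\<Sum>i. \<Sum>p'. \<Sum>i'. if close (p, i) (p', i') then Bi \<omega> (p, i) * Bi \<omega> (p', i') else 0) \<partial>Pspace b)"
    unfolding F2_def by (rule nn_integral_suminf) measurable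
  also have "\<dots> = (\<Sum>p. \<Sum>i. \<integral>\<^sup>+\<omega>. (\<Sum>p'. \<Sum>i'. if close (p, i) (p', i') then Bi \<omega> (p, i) * Bi \<omega> (p', i') else 0) \<partial>Pspace b)"
    by (rule suminf_cong, rule nn_integral_suminf) measurable
  also have "\<dots> = (\<Sum>p. \<Sum>i. \<Sum>p'. \<integral>\<^sup>+\<omega>. (\<Sum>i'. if close (p, i) (p', i') then Bi \<omega> (p, i) * Bi \<omega> (p', i') else 0) \<partial>Pspace b)"
    by (rule suminf_cong, rule suminf_cong, rule nn_integral_suminf) measurable
  also have "\<dots> = (\<Sum>p. \<Sum>i. \<Sum>p'. \<Sum>i'. \<integral>\<^sup>+\<omega>. (if close (p, i) (p', i') then Bi \<omega> (p, i) * Bi \<omega> (p', i') else 0) \<partial>Pspace b)"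
    by (rule suminf_cong, rule suminf_cong, rule suminf_cong, rule nn_integral_suminf) measurable
  also have "\<dots> = (\<Sum>p. \<Sum>i. \<Sum>p'. \<Sum>i'. if close (p, i) (p', i') then Q p * Q p' else 0)"
  proof (intro suminf_cong)
    fix p i p' i'
    show "(\<integral>\<^sup>+\<omega>. (if close (p, i) (p', i') then Bi \<omega> (p, i) * Bi \<omega> (p', i') else 0) \<partial>Pspace b)
        = (if close (p, i) (p', i') then Q p * Q p' else 0)"
    proof (cases "close (p, i) (p', i')")
      case True
      then have "(p, i) \<noteq> (p', i')" by (simp add: close_def)
      then show ?thesis using True pair_indep[of "(p, i)" "(p', i')"] by (simp add: Bi_def Q_def)
    qed simp
  qed
  finally show ?thesis .
qed

definition K :: real where "K = (2 / lam) powr b"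

lemma K_nonneg: "K \<ge> 0" unfolding K_def by simp

lemma Qb:
  assumes p: "prime p" and c: "c \<ge> 0"
  shows "ennreal c * Q p \<le> ennreal (c * K * real p powr (- (real m * b)))"
proof -
  have "ennreal c * Q p \<le> ennreal c * ennreal (K * real p powr (- (real m * b)))"
    unfolding Q_def K_def by (rule mult_left_mono[OF q_bound[OF p b lam]]) simp
  also have "\<dots> = ennreal (c * (K * real p powr (- (real m * b))))"
    using c K_nonneg by (simp add: ennreal_mult)
  finally show ?thesis by (simp add: mult.assoc)
qed

lemma tau_pi: "tau b \<sigma> m (p, i) = real (Suc i) / rate b \<sigma> m p"
  by (simp add: tau_def)

lemma F1_bound:
  "(\<Sum>p. \<Sum>i. if early (p, i) then Q p else 0) \<le> (\<Sum>p. if prime p then ennreal (\<delta> * K * \<sigma> p) else 0)"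
proof (rule suminf_le_ennreal)
  fix p
  show "(\<Sum>i. if early (p, i) then Q p else 0) \<le> (if prime p then ennreal (\<delta> * K * \<sigma> p) else 0)"
  proof (cases "prime p \<and> rate b \<sigma> m p > 0")
    case True
    then have pp: "prime p" and r: "rate b \<sigma> m p > 0" by auto
    have ee: "early (p, i) \<longleftrightarrow> real (Suc i) / rate b \<sigma> m p \<le> \<delta>" for i
      using True by (simp add: early_def tau_pi)
    have "(\<Sum>i. if early (p, i) then Q p else 0) = (\<Sum>i. if real (Suc i) / rate b \<sigma> m p \<le> \<delta> then Q p else 0)"
      by (simp only: ee)
    also have "\<dots> \<le> ennreal (rate b \<sigma> m p * \<delta>) * Q p"
      by (rule sum_if_bound[OF count_le[OF r, of \<delta>]]) (use d count_le[OF r, of \<delta>] in auto)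
    also have "\<dots> \<le> ennreal (rate b \<sigma> m p * \<delta> * K * real p powr (- (real m * b)))"
      by (rule Qb[OF pp]) (use r d in simp)
    also have "rate b \<sigma> m p * \<delta> * K * real p powr (- (real m * b)) = \<delta> * K * Dconst b \<sigma> p"
      using rate_times[OF pp, where b=b and \<sigma>=\<sigma> and m=m] by (simp add: mult_ac)
    also have "ennreal (\<delta> * K * Dconst b \<sigma> p) \<le> ennreal (\<delta> * K * \<sigma> p)"
      using Dconst_bounds(2)[where \<sigma>=\<sigma>, OF pp b \<sigma>nn[OF pp]] d K_nonneg
      by (intro ennreal_leI mult_left_mono) auto
    finally show ?thesis using pp by simp
  next
    case False
    then have "\<not> early (p, i)" for i by (auto simp: early_def)
    then show ?thesis by simp
  qed
qed

lemma inner_bound: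
  "(\<Sum>i'. if close (p, i) (p', i') then Q p' else 0)
     \<le> (if prime p' then ennreal (2 * \<delta> * K * \<sigma> p' + K * real p' powr (- (real m * b))) else 0)"
proof (cases "prime p' \<and> rate b \<sigma> m p' > 0")
  case True
  then have pp: "prime p'" and r: "rate b \<sigma> m p' > 0" by auto
  let ?r = "rate b \<sigma> m p'"
  let ?t = "tau b \<sigma> m (p, i)"
  define W where "W i' \<longleftrightarrow> \<bar>?t - real (Suc i') / ?r\<bar> \<le> \<delta>" for i'
  have "(\<Sum>i'. if close (p, i) (p', i') then Q p' else 0) \<le> (\<Sum>i'. if W i' then Q p' else 0)"
    by (rule suminf_le_ennreal) (auto simp: close_def W_def tau_pi)
  also have "\<dots> \<le> ennreal (2 * \<delta> * ?r + 1) * Q p'"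
  proof -
    have win: "?r * (?t - \<delta>) - 1 \<le> real i' \<and> real i' \<le> ?r * (?t - \<delta>) - 1 + 2 * \<delta> * ?r" if "i' \<in> {i'. W i'}" for i'
    proof -
      have "?t - \<delta> \<le> real (Suc i') / ?r" "real (Suc i') / ?r \<le> ?t + \<delta>" using that by (auto simp: W_def)
      then have "?r * (?t - \<delta>) \<le> real (Suc i')" "real (Suc i') \<le> ?r * (?t + \<delta>)"
        using r by (auto simp: field_simps)
      then show ?thesis by (simp add: algebra_simps)
    qed
    have L: "2 * \<delta> * ?r \<ge> 0" using d r by simp
    show ?thesis by (rule sum_if_bound[OF card_window(1)[OF L win] card_window(2)[OF L win]])
  qed
  also have "\<dots> \<le> ennreal ((2 * \<delta> * ?r + 1) * K * real p' powr (- (real m * b)))"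
    by (rule Qb[OF pp]) (use r d in simp)
  also have "(2 * \<delta> * ?r + 1) * K * real p' powr (- (real m * b)) = 2 * \<delta> * K * Dconst b \<sigma> p' + K * real p' powr (- (real m * b))"
    using rate_times[OF pp, where b=b and \<sigma>=\<sigma> and m=m] by (simp add: algebra_simps)
  also have "ennreal \<dots> \<le> ennreal (2 * \<delta> * K * \<sigma> p' + K * real p' powr (- (real m * b)))"
    using Dconst_bounds(2)[where \<sigma>=\<sigma>, OF pp b \<sigma>nn[OF pp]] d K_nonneg
    by (intro ennreal_leI add_right_mono mult_left_mono) auto
  finally show ?thesis using pp by simp
next
  case False
  then have "\<not> close (p, i) (p', i')" for i' by (auto simp: close_def)
  then show ?thesis by simp
qed

definition S2 :: ennreal where
  "S2 = (\<Sum>p'. if prime p' then ennreal (2 * \<delta> * K * \<sigma> p' + K * real p' powr (- (real m * b))) else 0)"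

lemma F2_bound:
  "(\<Sum>p. \<Sum>i. \<Sum>p'. \<Sum>i'. if close (p, i) (p', i') then Q p * Q p' else 0)
     \<le> (\<Sum>p. if prime p then ennreal (T * K * \<sigma> p) else 0) * S2"
proof -
  have "(\<Sum>p. \<Sum>i. \<Sum>p'. \<Sum>i'. if close (p, i) (p', i') then Q p * Q p' else 0)
      \<le> (\<Sum>p. (if prime p then ennreal (T * K * \<sigma> p) else 0) * S2)"
  proof (rule suminf_le_ennreal)
    fix p
    show "(\<Sum>i. \<Sum>p'. \<Sum>i'. if close (p, i) (p', i') then Q p * Q p' else 0)
        \<le> (if prime p then ennreal (T * K * \<sigma> p) else 0) * S2"
    proof (cases "prime p \<and> rate b \<sigma> m p > 0")
      case True
      then have pp: "prime p" and r: "rate b \<sigma> m p > 0" by auto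
      let ?r = "rate b \<sigma> m p"
      have step: "(\<Sum>p'. \<Sum>i'. if close (p, i) (p', i') then Q p * Q p' else 0)
          \<le> (if real (Suc i) / ?r \<le> T then Q p * S2 else 0)" for i
      proof (cases "real (Suc i) / ?r \<le> T")
        case True
        have "(\<Sum>p'. \<Sum>i'. if close (p, i) (p', i') then Q p * Q p' else 0)
            = (\<Sum>p'. Q p * (\<Sum>i'. if close (p, i) (p', i') then Q p' else 0))"
        proof (rule suminf_cong)
          fix p'
          have "(\<Sum>i'. if close (p, i) (p', i') then Q p * Q p' else 0) = (\<Sum>i'. Q p * (if close (p, i) (p', i') then Q p' else 0))"
            by (rule suminf_cong) simp
          then show "(\<Sum>i'. if close (p, i) (p', i') then Q p * Q p' else 0) = Q p * (\<Sum>i'. if close (p, i) (p', i') then Q p' else 0)"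
            by simp
        qed
        also have "\<dots> = Q p * (\<Sum>p'. \<Sum>i'. if close (p, i) (p', i') then Q p' else 0)" by simp
        also have "\<dots> \<le> Q p * S2" unfolding S2_def
          by (rule mult_left_mono[OF suminf_le_ennreal[OF inner_bound]]) simp
        finally show ?thesis using True by simp
      next
        case False
        then have "\<not> close (p, i) (p', i')" for p' i' using r by (auto simp: close_def tau_pi)
        then show ?thesis by simp
      qed
      have "(\<Sum>i. \<Sum>p'. \<Sum>i'. if close (p, i) (p', i') then Q p * Q p' else 0)
          \<le> (\<Sum>i. if real (Suc i) / ?r \<le> T then Q p * S2 else 0)"
        by (rule suminf_le_ennreal[OF step])
      also have "\<dots> \<le> ennreal (?r * T) * (Q p * S2)"
        by (rule sum_if_bound[OF count_le[OF r, of T]]) (use T count_le[OF r, of T] in auto)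
      also have "\<dots> = (ennreal (?r * T) * Q p) * S2" by (simp add: mult.assoc)
      also have "\<dots> \<le> ennreal (?r * T * K * real p powr (- (real m * b))) * S2"
        by (rule mult_right_mono[OF Qb[OF pp]]) (use r T in auto)
      also have "?r * T * K * real p powr (- (real m * b)) = T * K * Dconst b \<sigma> p"
        using rate_times[OF pp, where b=b and \<sigma>=\<sigma> and m=m] by (simp add: mult_ac)
      also have "ennreal (T * K * Dconst b \<sigma> p) * S2 \<le> ennreal (T * K * \<sigma> p) * S2"
        using Dconst_bounds(2)[where \<sigma>=\<sigma>, OF pp b \<sigma>nn[OF pp]] T K_nonneg
        by (intro mult_right_mono ennreal_leI mult_left_mono) auto
      finally show ?thesis using pp by simp
    next
      case False
      then have "\<not> close (p, i) (p', i')" for i p' i' by (auto simp: close_def)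
      then show ?thesis by simp
    qed
  qed
  also have "\<dots> = (\<Sum>p. if prime p then ennreal (T * K * \<sigma> p) else 0) * S2"
    by (rule ennreal_suminf_multc)
  finally show ?thesis .
qed

lemma Ssig_nonneg: "Ssig \<sigma> \<ge> 0"
  unfolding Ssig_def by (rule suminf_nonneg[OF sig_summable[OF \<sigma>sum]]) (simp add: \<sigma>nn)

lemma S2_bound:
  assumes s2: "real m * b \<ge> 2"
  shows "S2 \<le> ennreal (2 * \<delta> * K * Ssig \<sigma>) + ennreal (K * 4 * 2 powr (- (real m * b)) * Z0)"
proof -
  have "S2 = (\<Sum>p. (if prime p then ennreal (2 * \<delta> * K * \<sigma> p) else 0) + (if prime p then ennreal (K * real p powr (- (real m * b))) else 0))"
    unfolding S2_def
  proof (rule suminf_cong)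
    fix p
    show "(if prime p then ennreal (2 * \<delta> * K * \<sigma> p + K * real p powr (- (real m * b))) else 0)
        = (if prime p then ennreal (2 * \<delta> * K * \<sigma> p) else 0) + (if prime p then ennreal (K * real p powr (- (real m * b))) else 0)"
      using \<sigma>nn[of p] d K_nonneg by (simp add: ennreal_plus)
  qed
  also have "\<dots> = (\<Sum>p. if prime p then ennreal (2 * \<delta> * K * \<sigma> p) else 0) + (\<Sum>p. if prime p then ennreal (K * real p powr (- (real m * b))) else 0)"
    by (rule suminf_add[symmetric]) auto
  also have "\<dots> \<le> ennreal (2 * \<delta> * K * Ssig \<sigma>) + ennreal (K * 4 * 2 powr (- (real m * b)) * Z0)"
  proof (rule add_mono)
    show "(\<Sum>p. if prime p then ennreal (2 * \<delta> * K * \<sigma> p) else 0) \<le> ennreal (2 * \<delta> * K * Ssig \<sigma>)"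
      using sum_primes_sig[OF \<sigma>sum \<sigma>nn, of "2 * \<delta> * K"] d K_nonneg by simp
    show "(\<Sum>p. if prime p then ennreal (K * real p powr (- (real m * b))) else 0) \<le> ennreal (K * 4 * 2 powr (- (real m * b)) * Z0)"
      by (rule sum_primes_pow[OF s2 K_nonneg])
  qed
  finally show ?thesis .
qed

definition Gb :: real where
  "Gb = \<delta> * K * Ssig \<sigma> + T * K * Ssig \<sigma> * (2 * \<delta> * K * Ssig \<sigma> + K * 4 * 2 powr (- (real m * b)) * Z0)"

lemma Z0_nonneg: "Z0 \<ge> 0"
  unfolding Z0_def by (rule suminf_nonneg[OF Z0_summable]) simp

lemma total_bound:
  assumes s2: "real m * b \<ge> 2"
  shows "(\<integral>\<^sup>+\<omega>. F1 \<omega> + F2 \<omega> \<partial>Pspace b) \<le> ennreal Gb"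
proof -
  have nn: "\<delta> * K * Ssig \<sigma> \<ge> 0" "T * K * Ssig \<sigma> \<ge> 0" "2 * \<delta> * K * Ssig \<sigma> \<ge> 0" "K * 4 * 2 powr (- (real m * b)) * Z0 \<ge> 0"
    using d T K_nonneg Ssig_nonneg Z0_nonneg by auto
  have "(\<integral>\<^sup>+\<omega>. F1 \<omega> + F2 \<omega> \<partial>Pspace b) = (\<integral>\<^sup>+\<omega>. F1 \<omega> \<partial>Pspace b) + (\<integral>\<^sup>+\<omega>. F2 \<omega> \<partial>Pspace b)"
    by (rule nn_integral_add) auto
  also have "\<dots> \<le> ennreal (\<delta> * K * Ssig \<sigma>) + ennreal (T * K * Ssig \<sigma>) * (ennreal (2 * \<delta> * K * Ssig \<sigma>) + ennreal (K * 4 * 2 powr (- (real m * b)) * Z0))"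
  proof (rule add_mono)
    show "(\<integral>\<^sup>+\<omega>. F1 \<omega> \<partial>Pspace b) \<le> ennreal (\<delta> * K * Ssig \<sigma>)"
      unfolding int_F1 using F1_bound sum_primes_sig[OF \<sigma>sum \<sigma>nn, of "\<delta> * K"] d K_nonneg by simp
    have "(\<integral>\<^sup>+\<omega>. F2 \<omega> \<partial>Pspace b) \<le> (\<Sum>p. if prime p then ennreal (T * K * \<sigma> p) else 0) * S2"
      unfolding int_F2 by (rule F2_bound)
    also have "\<dots> = ennreal (T * K * Ssig \<sigma>) * S2"
      using sum_primes_sig[OF \<sigma>sum \<sigma>nn, of "T * K"] T K_nonneg by simp
    also have "\<dots> \<le> ennreal (T * K * Ssig \<sigma>) * (ennreal (2 * \<delta> * K * Ssig \<sigma>) + ennreal (K * 4 * 2 powr (- (real m * b)) * Z0))"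
      by (rule mult_left_mono[OF S2_bound[OF s2]]) simp
    finally show "(\<integral>\<^sup>+\<omega>. F2 \<omega> \<partial>Pspace b) \<le> ennreal (T * K * Ssig \<sigma>) * (ennreal (2 * \<delta> * K * Ssig \<sigma>) + ennreal (K * 4 * 2 powr (- (real m * b)) * Z0))" .
  qed
  also have "\<dots> = ennreal Gb"
  proof -
    let ?a = "\<delta> * K * Ssig \<sigma>" and ?t = "T * K * Ssig \<sigma>" and ?c = "2 * \<delta> * K * Ssig \<sigma>"
      and ?e = "K * 4 * 2 powr (- (real m * b)) * Z0"
    have "ennreal ?c + ennreal ?e = ennreal (?c + ?e)" using nn by (simp add: ennreal_plus)
    moreover have "ennreal ?t * ennreal (?c + ?e) = ennreal (?t * (?c + ?e))" using nn by (simp add: ennreal_mult)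
    moreover have pos: "0 \<le> ?t * (?c + ?e)" by (meson add_nonneg_nonneg mult_nonneg_nonneg nn)
    moreover have "ennreal ?a + ennreal (?t * (?c + ?e)) = ennreal (?a + ?t * (?c + ?e))"
      by (rule ennreal_plus[OF nn(1) pos, symmetric])
    ultimately show ?thesis unfolding Gb_def by simp
  qed
  finally show ?thesis .
qed

lemma Gb_nonneg: "Gb \<ge> 0"
proof -
  have nn: "\<delta> * K * Ssig \<sigma> \<ge> 0" "T * K * Ssig \<sigma> \<ge> 0" "2 * \<delta> * K * Ssig \<sigma> \<ge> 0" "K * 4 * 2 powr (- (real m * b)) * Z0 \<ge> 0"
    using d T K_nonneg Ssig_nonneg Z0_nonneg by auto
  then show ?thesis unfolding Gb_def by (meson add_nonneg_nonneg mult_nonneg_nonneg)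
qed

lemma outer_bound:
  assumes s2: "real m * b \<ge> 2" and mh: "(1/2) ^ m \<le> lam"
  shows "outer_prob (Pspace b) {\<omega> \<in> space (Pspace b). mod_cont' T (adelic_path b \<sigma> m \<omega>) \<delta> \<ge> ereal lam} \<le> Gb"
proof -
  let ?M = "Pspace b"
  let ?S = "{\<omega> \<in> space (Pspace b). mod_cont' T (adelic_path b \<sigma> m \<omega>) \<delta> \<ge> ereal lam}"
  define Bad where "Bad = {\<omega> \<in> space ?M. 1 \<le> F1 \<omega> + F2 \<omega>}"
  have Bs: "Bad \<in> sets ?M" unfolding Bad_def by measurable
  have sub: "?S \<subseteq> Bad"
  proof
    fix \<omega> assume h: "\<omega> \<in> ?S"
    have "\<not> good b \<sigma> m lam T \<delta> \<omega>"
    proof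
      assume g: "good b \<sigma> m lam T \<delta> \<omega>"
      have rn: "\<And>p. prime p \<Longrightarrow> rate b \<sigma> m p \<ge> 0"
        using rate_nonneg b \<sigma>nn by blast
      have "mod_cont' T (adelic_path b \<sigma> m \<omega>) \<delta> < ereal lam"
        by (rule det_main[OF rn T lam d mh g])
      then show False using h by (simp add: not_le[symmetric])
    qed
    then show "\<omega> \<in> Bad" using notgood_F h unfolding Bad_def by auto
  qed
  have em: "emeasure ?M Bad \<le> ennreal Gb"
  proof -
    have "emeasure ?M Bad = (\<integral>\<^sup>+\<omega>. indicator Bad \<omega> \<partial>?M)" by (rule nn_integral_indicator[OF Bs, symmetric])
    also have "\<dots> \<le> (\<integral>\<^sup>+\<omega>. F1 \<omega> + F2 \<omega> \<partial>?M)" by (rule nn_integral_mono) (auto simp: Bad_def indicator_def)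
    also have "\<dots> \<le> ennreal Gb" by (rule total_bound[OF s2])
    finally show ?thesis .
  qed
  have mb: "measure ?M Bad \<le> Gb" unfolding measure_def by (rule enn2real_leI[OF Gb_nonneg em])
  have "outer_prob ?M ?S \<le> measure ?M Bad"
    unfolding outer_prob_def
  proof (rule cInf_lower)
    show "measure ?M Bad \<in> measure ?M ` {B \<in> sets ?M. ?S \<subseteq> B}" using Bs sub by blast
    show "bdd_below (measure ?M ` {B \<in> sets ?M. ?S \<subseteq> B})" by (rule bdd_belowI[of _ 0]) auto
  qed
  then show ?thesis using mb by linarith
qed

end

lemma outer_prob_nonneg:
  assumes "A \<subseteq> space M"
  shows "outer_prob M A \<ge> 0"
  unfolding outer_prob_def
proof (rule cInf_greatest)
  show "measure M ` {B \<in> sets M. A \<subseteq> B} \<noteq> {}" using assms by blast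
qed auto

theorem proposition3:
  fixes b :: real and \<sigma> :: "nat \<Rightarrow> real" and T lam :: real
  assumes "b > 0"
    and "\<forall>p. prime p \<longrightarrow> \<sigma> p \<ge> 0"
    and "\<sigma> summable_on {p. prime p}"
    and "T > 0" and "lam > 0"
  shows "((\<lambda>\<delta>. limsup (\<lambda>m. ereal (outer_prob (Pspace b)
            {\<omega> \<in> space (Pspace b). mod_cont' T (adelic_path b \<sigma> m \<omega>) \<delta> \<ge> ereal lam})))
          \<longlongrightarrow> 0) (at_right 0)"
proof -
  note b = assms(1) and T = assms(4) and lam = assms(5) and ssum = assms(3)
  have snn: "\<And>p. prime p \<Longrightarrow> \<sigma> p \<ge> 0" using assms(2) by blast
  define Kc where "Kc = (2 / lam) powr b"
  define S where "S = Ssig \<sigma>"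
  define C where "C \<delta> = \<delta> * Kc * S + T * Kc * S * (2 * \<delta> * Kc * S)" for \<delta> :: real
  define E where "E = T * Kc * S * (Kc * 4 * Z0)"
  define P where "P \<delta> m = outer_prob (Pspace b)
            {\<omega> \<in> space (Pspace b). mod_cont' T (adelic_path b \<sigma> m \<omega>) \<delta> \<ge> ereal lam}" for \<delta> m
  have ev: "eventually (\<lambda>m. real m * b \<ge> 2 \<and> (1/2) ^ m \<le> lam) sequentially"
  proof (rule eventually_conj)
    obtain N :: nat where N: "2 / b \<le> real N" using real_arch_simple by blast
    show "eventually (\<lambda>m. real m * b \<ge> 2) sequentially"
    proof (rule eventually_sequentiallyI[of N])
      fix m assume "N \<le> m"
      then have "2 / b \<le> real m" using N by linarith
      then show "real m * b \<ge> 2" using b by (simp add: divide_le_eq)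
    qed
    have "(\<lambda>m. (1/2::real) ^ m) \<longlonglongrightarrow> 0" by (rule LIMSEQ_power_zero) simp
    from order_tendstoD(2)[OF this lam] have "eventually (\<lambda>m. (1/2::real) ^ m < lam) sequentially" .
    then show "eventually (\<lambda>m. (1/2) ^ m \<le> lam) sequentially"
      by (rule eventually_mono) simp
  qed
  have bound: "P \<delta> m \<le> C \<delta> + E * 2 powr (- (real m * b))"
    if d: "\<delta> > 0" and m1: "real m * b \<ge> 2" and m2: "(1/2) ^ m \<le> lam" for \<delta> m
  proof -
    have "P \<delta> m \<le> Gb b \<sigma> m lam T \<delta>"
      unfolding P_def by (rule outer_bound[OF b snn T lam d ssum m1 m2])
    also have "Gb b \<sigma> m lam T \<delta> = C \<delta> + E * 2 powr (- (real m * b))"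
      using Gb_def[OF b snn T lam d ssum, of m] K_def[OF b snn T lam d ssum]
      unfolding C_def E_def Kc_def S_def
      by (simp add: algebra_simps)
    finally show ?thesis .
  qed
  have P0: "P \<delta> m \<ge> 0" for \<delta> m unfolding P_def by (rule outer_prob_nonneg) auto
  have lim2: "(\<lambda>m. 2 powr (- (real m * b))) \<longlonglongrightarrow> 0"
  proof -
    have "(\<lambda>m. 2 powr (- (real m * b))) = (\<lambda>m. (2 powr (- b)) ^ m)"
      by (rule ext) (simp add: powr_power)
    moreover have "(\<lambda>m. (2 powr (- b)) ^ m) \<longlonglongrightarrow> 0"
      by (rule LIMSEQ_power_zero) (use b in \<open>simp add: powr_less_one\<close>)
    ultimately show ?thesis by simp
  qed
  have upper: "limsup (\<lambda>m. ereal (P \<delta> m)) \<le> ereal (C \<delta>)" if d: "\<delta> > 0" for \<delta>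
  proof -
    have "limsup (\<lambda>m. ereal (P \<delta> m)) \<le> limsup (\<lambda>m. ereal (C \<delta> + E * 2 powr (- (real m * b))))"
      by (rule Limsup_mono) (use ev in \<open>auto elim!: eventually_mono intro: bound[OF d]\<close>)
    also have "\<dots> = ereal (C \<delta>)"
    proof (rule lim_imp_Limsup)
      have "(\<lambda>m. C \<delta> + E * 2 powr (- (real m * b))) \<longlonglongrightarrow> C \<delta> + E * 0"
        by (intro tendsto_intros lim2)
      then show "(\<lambda>m. ereal (C \<delta> + E * 2 powr (- (real m * b)))) \<longlonglongrightarrow> ereal (C \<delta>)" by simp
    qed simp
    finally show ?thesis .
  qed
  have lower: "0 \<le> limsup (\<lambda>m. ereal (P \<delta> m))" for \<delta>
    by (rule le_Limsup) (auto simp: P0)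
  have "((\<lambda>\<delta>. limsup (\<lambda>m. ereal (P \<delta> m))) \<longlongrightarrow> 0) (at_right 0)"
  proof (rule tendsto_sandwich[where f="\<lambda>_. 0" and h="\<lambda>\<delta>. ereal (C \<delta>)"])
    show "\<forall>\<^sub>F \<delta> in at_right 0. 0 \<le> limsup (\<lambda>m. ereal (P \<delta> m))" using lower by simp
    show "\<forall>\<^sub>F \<delta> in at_right 0. limsup (\<lambda>m. ereal (P \<delta> m)) \<le> ereal (C \<delta>)"
      using eventually_at_right_less[of "0::real"] by (rule eventually_mono) (rule upper)
    show "((\<lambda>_. 0) \<longlongrightarrow> (0::ereal)) (at_right 0)" by simp
    have "((\<lambda>\<delta>. C \<delta>) \<longlongrightarrow> C 0) (at_right 0)" unfolding C_def by (intro tendsto_intros)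
    then show "((\<lambda>\<delta>. ereal (C \<delta>)) \<longlongrightarrow> 0) (at_right 0)" by (simp add: C_def zero_ereal_def)
  qed
  then show ?thesis unfolding P_def .
qed

end
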